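(* If $K$ is a separably determined compact line and $L$ is a closed subset of $K$, then $L$ (with the induced order) is a separably determined compact line.
   Context: A compact line is a totally ordered set which is compact in its order topology. For a compact line $H$, $H^+$ is the set of right-isolated points ($\max H$ or points with an immediate successor in $H$). $\mathrm{NBV}(K)$ is the space of right-continuous real maps of bounded variation on $K$, identified with $C(K)^*$ via $F_\mu(t)=\mu([\min K,t])$. $\lim_{i\in I}a_i=0$ means $\{i:|a_i|\ge\varepsilon\}$ is finite for every $\varepsilon>0$; $c_0(I)$ is the set of such families. $(F_i)_{i\in I}$ is weak*-null if $\lim_i\int f\,d\mu_i=0$ for all $f\in C(K)$. $(F_i)$ is of type $c_0\ell_1$ over $Q$ if $F_i(t)=a_{i,t}+b_{i,t}$ with $\lim_ia_{i,t}=0$ for each $t\in Q$ and $\sup_i\sum_{t\in Q}|b_{i,t}|<\infty$. A compact line $K$ is separably determined if for every weak*-null family $(F_i)_{i\in I}$ in $\mathrm{NBV}(K)$ and every $Q\subseteq K$: whenever $\{t\in Q\cap(H\setminus H^+):(F_i(t))_{i\in I}\notin c_0(I)\}$ is countable for every closed separable $H\subseteq K$, the family is of type $c_0\ell_1$ over $Q$. *)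

theory Defs
  imports "HOL-Analysis.Analysis"
begin

text \<open>A totally ordered set is represented as a subset K of a linearly ordered type,
  carrying the induced order.\<close>

definition order_top :: "'a::linorder set \<Rightarrow> 'a topology" where
  "order_top K = topology_generated_by
     (insert K ((\<lambda>a. {x\<in>K. x < a}) ` K \<union> (\<lambda>a. {x\<in>K. a < x}) ` K))"

definition compact_line :: "'a::linorder set \<Rightarrow> bool" where
  "compact_line K \<longleftrightarrow> compact_space (order_top K)"

definition minK :: "'a::linorder set \<Rightarrow> 'a" where
  "minK K = (LEAST x. x \<in> K)"

definition maxK :: "'a::linorder set \<Rightarrow> 'a" where
  "maxK K = (GREATEST x. x \<in> K)"

definition right_isolated :: "'a::linorder set \<Rightarrow> 'a set" where
  "right_isolated H = {x\<in>H. (\<forall>y\<in>H. y \<le> x) \<or>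
                              (\<exists>y\<in>H. x < y \<and> \<not> (\<exists>z\<in>H. x < z \<and> z < y))}"

definition prevP :: "'a::linorder set \<Rightarrow> 'a \<Rightarrow> 'a" where
  "prevP P t = Max {s\<in>P. s < t}"

definition right_continuous_on :: "'a::linorder set \<Rightarrow> ('a \<Rightarrow> real) \<Rightarrow> bool" where
  "right_continuous_on K F \<longleftrightarrow>
     (\<forall>t\<in>K. \<forall>\<epsilon>>0. (\<exists>u\<in>K. t < u \<and> (\<forall>s\<in>K. t \<le> s \<and> s < u \<longrightarrow> \<bar>F s - F t\<bar> < \<epsilon>))
                    \<or> (\<forall>s\<in>K. s \<le> t))"

definition bounded_variation_on :: "'a::linorder set \<Rightarrow> ('a \<Rightarrow> real) \<Rightarrow> bool" where
  "bounded_variation_on K F \<longleftrightarrow>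
     (\<exists>M. \<forall>P. finite P \<and> P \<subseteq> K \<longrightarrow>
            (\<Sum>t\<in>P - {Min P}. \<bar>F t - F (prevP P t)\<bar>) \<le> M)"

definition NBV :: "'a::linorder set \<Rightarrow> ('a \<Rightarrow> real) set" where
  "NBV K = {F. right_continuous_on K F \<and> bounded_variation_on K F}"

text \<open>Riemann--Stieltjes sum for the measure mu_F with mu_F({min K}) = F(min K) and
  mu_F((a,b]) = F b - F a, with tags s t in (prevP P t, t].\<close>
definition RS_sum :: "'a::linorder set \<Rightarrow> ('a \<Rightarrow> real) \<Rightarrow> ('a \<Rightarrow> real) \<Rightarrow> 'a set \<Rightarrow> ('a \<Rightarrow> 'a) \<Rightarrow> real" where
  "RS_sum K F f P s = f (minK K) * F (minK K) +
     (\<Sum>t\<in>P - {Min P}. f (s t) * (F t - F (prevP P t)))"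

definition has_stieltjes_integral ::
    "'a::linorder set \<Rightarrow> ('a \<Rightarrow> real) \<Rightarrow> ('a \<Rightarrow> real) \<Rightarrow> real \<Rightarrow> bool" where
  "has_stieltjes_integral K F f I \<longleftrightarrow>
     (\<forall>\<epsilon>>0. \<exists>P0. finite P0 \<and> P0 \<subseteq> K \<and>
        (\<forall>P s. finite P \<and> P0 \<subseteq> P \<and> P \<subseteq> K \<and> minK K \<in> P \<and> maxK K \<in> P \<and>
               (\<forall>t\<in>P - {Min P}. s t \<in> K \<and> prevP P t < s t \<and> s t \<le> t)
           \<longrightarrow> \<bar>RS_sum K F f P s - I\<bar> < \<epsilon>))"

definition c0 :: "('i \<Rightarrow> real) \<Rightarrow> bool" where
  "c0 a \<longleftrightarrow> (\<forall>\<epsilon>>0. finite {i. \<bar>a i\<bar> \<ge> \<epsilon>})"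

definition weak_star_null :: "'a::linorder set \<Rightarrow> ('i \<Rightarrow> 'a \<Rightarrow> real) \<Rightarrow> bool" where
  "weak_star_null K F \<longleftrightarrow>
     (\<forall>f. continuous_map (order_top K) euclideanreal f \<longrightarrow>
        (\<exists>I. (\<forall>i. has_stieltjes_integral K (F i) f (I i)) \<and> c0 I))"

definition type_c0l1 :: "'a set \<Rightarrow> ('i \<Rightarrow> 'a \<Rightarrow> real) \<Rightarrow> bool" where
  "type_c0l1 Q F \<longleftrightarrow>
     (\<exists>a b. (\<forall>i. \<forall>t\<in>Q. F i t = a i t + b i t) \<and>
            (\<forall>t\<in>Q. c0 (\<lambda>i. a i t)) \<and>
            (\<exists>M. \<forall>i. \<forall>S. finite S \<and> S \<subseteq> Q \<longrightarrow> (\<Sum>t\<in>S. \<bar>b i t\<bar>) \<le> M))"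

text \<open>Separably determined, for families indexed by the type 'i.\<close>
definition separably_determined :: "'i itself \<Rightarrow> 'a::linorder set \<Rightarrow> bool" where
  "separably_determined (_ :: 'i itself) K \<longleftrightarrow>
     (\<forall>(F :: 'i \<Rightarrow> 'a \<Rightarrow> real) Q.
        (\<forall>i. F i \<in> NBV K) \<and> weak_star_null K F \<and> Q \<subseteq> K \<and>
        (\<forall>H. H \<subseteq> K \<and> closedin (order_top K) H \<and>
             separable_space (subtopology (order_top K) H) \<longrightarrow>
             countable {t \<in> Q \<inter> (H - right_isolated H). \<not> c0 (\<lambda>i. F i t)})
        \<longrightarrow> type_c0l1 Q F)"

end

theory Submission
  imports Defs
begin

definition lft :: "'a::linorder set \<Rightarrow> 'a set \<Rightarrow> 'a \<Rightarrow> bool" where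
  "lft K U x \<longleftrightarrow> (\<exists>a\<in>K. a<x \<and> (\<forall>y\<in>K. a<y \<and> y\<le>x \<longrightarrow> y\<in>U)) \<or> (\<forall>y\<in>K. y\<le>x \<longrightarrow> y\<in>U)"
definition rgt :: "'a::linorder set \<Rightarrow> 'a set \<Rightarrow> 'a \<Rightarrow> bool" where
  "rgt K U x \<longleftrightarrow> (\<exists>b\<in>K. x<b \<and> (\<forall>y\<in>K. x\<le>y \<and> y<b \<longrightarrow> y\<in>U)) \<or> (\<forall>y\<in>K. x\<le>y \<longrightarrow> y\<in>U)"

lemma topspace_ot[simp]: "topspace (order_top K) = K"
  unfolding order_top_def by auto

lemma open_lt: "c \<in> K \<Longrightarrow> openin (order_top K) {x\<in>K. x<c}"
  unfolding order_top_def by (rule topology_generated_by_Basis) auto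
lemma open_gt: "c \<in> K \<Longrightarrow> openin (order_top K) {x\<in>K. c<x}"
  unfolding order_top_def by (rule topology_generated_by_Basis) auto

lemma lft_mono: "lft K U x \<Longrightarrow> U \<subseteq> V \<Longrightarrow> lft K V x"
  unfolding lft_def by blast
lemma rgt_mono: "rgt K U x \<Longrightarrow> U \<subseteq> V \<Longrightarrow> rgt K V x"
  unfolding rgt_def by blast

lemma lft_Int: "lft K U x \<Longrightarrow> lft K V x \<Longrightarrow> lft K (U\<inter>V) x"
  unfolding lft_def
  apply (elim disjE bexE conjE)
  subgoal for a b apply (rule disjI1) apply (rule bexI[of _ "max a b"]) by (auto simp: max_def)
  by blast+

lemma rgt_Int: "rgt K U x \<Longrightarrow> rgt K V x \<Longrightarrow> rgt K (U\<inter>V) x"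
  unfolding rgt_def
  apply (elim disjE bexE conjE)
  subgoal for a b apply (rule disjI1) apply (rule bexI[of _ "min a b"]) by (auto simp: min_def)
  by blast+

lemma open_imp_lr:
  assumes "openin (order_top K) U"
  shows "U \<subseteq> K \<and> (\<forall>x\<in>U. lft K U x \<and> rgt K U x)"
proof -
  have "generate_topology_on (insert K ((\<lambda>a. {x\<in>K. x < a}) ` K \<union> (\<lambda>a. {x\<in>K. a < x}) ` K)) U"
    using assms unfolding order_top_def by (rule openin_topology_generated_by)
  then show ?thesis
  proof induct
    case Empty then show ?case by auto
  next
    case (Int a b) then show ?case by (auto intro: lft_Int rgt_Int)
  next
    case (UN S)
    have "\<Union>S \<subseteq> K" using UN by blast
    moreover have "lft K (\<Union>S) x \<and> rgt K (\<Union>S) x" if xS: "x \<in> \<Union>S" for x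
    proof -
      obtain k where "k\<in>S" "x\<in>k" using xS by blast
      then show ?thesis using UN
        by (meson Union_upper lft_mono rgt_mono)
    qed
    ultimately show ?case by blast
  next
    case (Basis s)
    then show ?case unfolding lft_def rgt_def by auto
  qed
qed

lemma lr_imp_open:
  assumes "U \<subseteq> K" "\<And>x. x\<in>U \<Longrightarrow> lft K U x" "\<And>x. x\<in>U \<Longrightarrow> rgt K U x"
  shows "openin (order_top K) U"
proof (subst openin_subopen, intro ballI)
  fix x assume x: "x \<in> U"
  have xK: "x \<in> K" using x assms by blast
  obtain A where A: "openin (order_top K) A" "x\<in>A" "\<And>y. y\<in>A \<Longrightarrow> y \<le> x \<Longrightarrow> y \<in> U" "A \<subseteq> K"
  proof -
    from assms(2)[OF x] show ?thesis unfolding lft_def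
    proof (elim disjE bexE conjE)
      fix a assume "a\<in>K" "a<x" "\<forall>y\<in>K. a < y \<and> y \<le> x \<longrightarrow> y \<in> U"
      then show ?thesis using that[of "{y\<in>K. a<y}"] open_gt[of a K] xK by auto
    next
      assume "\<forall>y\<in>K. y \<le> x \<longrightarrow> y \<in> U"
      then show ?thesis using that[of K] xK openin_topspace[of "order_top K"] by auto
    qed
  qed
  obtain B where B: "openin (order_top K) B" "x\<in>B" "\<And>y. y\<in>B \<Longrightarrow> x \<le> y \<Longrightarrow> y \<in> U" "B \<subseteq> K"
  proof -
    from assms(3)[OF x] show ?thesis unfolding rgt_def
    proof (elim disjE bexE conjE)
      fix a assume "a\<in>K" "x<a" "\<forall>y\<in>K. x \<le> y \<and> y < a \<longrightarrow> y \<in> U"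
      then show ?thesis using that[of "{y\<in>K. y<a}"] open_lt[of a K] xK by auto
    next
      assume "\<forall>y\<in>K. x \<le> y \<longrightarrow> y \<in> U"
      then show ?thesis using that[of K] xK openin_topspace[of "order_top K"] by auto
    qed
  qed
  show "\<exists>T. openin (order_top K) T \<and> x \<in> T \<and> T \<subseteq> U"
    apply (rule exI[of _ "A \<inter> B"])
    using A B by (auto, meson le_cases)
qed

lemma open_iff_lr: "openin (order_top K) U \<longleftrightarrow> U \<subseteq> K \<and> (\<forall>x\<in>U. lft K U x \<and> rgt K U x)"
  using open_imp_lr lr_imp_open by metis


lemma closed_le: "t \<in> K \<Longrightarrow> closedin (order_top K) {y\<in>K. y \<le> t}"
proof -
  assume t: "t\<in>K"
  have "K - {y\<in>K. y \<le> t} = {y\<in>K. t<y}" by auto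
  then show ?thesis unfolding closedin_def using open_gt[OF t] by auto
qed
lemma closed_ge: "t \<in> K \<Longrightarrow> closedin (order_top K) {y\<in>K. t \<le> y}"
proof -
  assume t: "t\<in>K"
  have "K - {y\<in>K. t \<le> y} = {y\<in>K. y<t}" by auto
  then show ?thesis unfolding closedin_def using open_lt[OF t] by auto
qed

lemma closed_has_max:
  assumes cK: "compact_line K" and cl: "closedin (order_top K) S" and ne: "S \<noteq> {}"
  shows "\<exists>m\<in>S. \<forall>y\<in>S. y \<le> m"
proof (rule ccontr)
  assume "\<not> ?thesis"
  then have nm: "\<forall>m\<in>S. \<exists>y\<in>S. m < y" by (meson not_le)
  have SK: "S \<subseteq> K" using cl closedin_subset by fastforce
  define U where "U = insert (K - S) ((\<lambda>s. {y\<in>K. y<s}) ` S)"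
  have opU: "\<forall>u\<in>U. openin (order_top K) u"
    unfolding U_def using cl SK open_lt unfolding closedin_def by auto
  have cov: "K \<subseteq> \<Union>U"
  proof
    fix y assume y: "y\<in>K"
    show "y \<in> \<Union>U"
    proof (cases "y\<in>S")
      case True then obtain s where "s\<in>S" "y<s" using nm by blast
      then show ?thesis unfolding U_def using y by auto
    qed (use y in \<open>auto simp: U_def\<close>)
  qed
  obtain F where F: "finite F" "F \<subseteq> U" "K \<subseteq> \<Union>F"
    using cK opU cov unfolding compact_line_def compact_space_alt by force
  have "F - {K - S} \<subseteq> (\<lambda>s. {y\<in>K. y<s}) ` S" using F(2) unfolding U_def by auto
  then obtain T where T: "T \<subseteq> S" "F - {K-S} = (\<lambda>s. {y\<in>K. y<s}) ` T"
    by (meson subset_imageE)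
  have fT: "finite T"
  proof -
    have "inj_on (\<lambda>s. {y\<in>K. y<s}) T"
    proof (rule inj_onI)
      fix a b assume ab: "a\<in>T" "b\<in>T" "{y\<in>K. y<a} = {y\<in>K. y<b}"
      show "a = b"
      proof (rule ccontr)
        assume "a\<noteq>b"
        then have "a<b \<or> b<a" by auto
        then show False using ab T(1) SK by auto
      qed
    qed
    moreover have "finite ((\<lambda>s. {y\<in>K. y<s}) ` T)" using F(1) T(2) by (metis finite_Diff)
    ultimately show ?thesis using finite_image_iff by blast
  qed
  show False
  proof (cases "T = {}")
    case True
    then have "F \<subseteq> {K - S}" using T(2) by auto
    then have "K \<subseteq> K - S" using F(3) by auto
    then show False using ne SK by auto
  next
    case False
    define m where "m = Max T"
    have mT: "m\<in>T" unfolding m_def using fT False by simp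
    then have mK: "m \<in> K" "m\<in>S" using T SK by auto
    then obtain u where "u\<in>F" "m\<in>u" using F(3) by auto
    then have "u \<in> F - {K-S}" using mK by auto
    then obtain s where "s\<in>T" "m<s" using T(2) \<open>m\<in>u\<close> by auto
    then show False using Max_ge[OF fT, of s] m_def by auto
  qed
qed

lemma closed_has_min:
  assumes cK: "compact_line K" and cl: "closedin (order_top K) S" and ne: "S \<noteq> {}"
  shows "\<exists>m\<in>S. \<forall>y\<in>S. m \<le> y"
proof (rule ccontr)
  assume "\<not> ?thesis"
  then have nm: "\<forall>m\<in>S. \<exists>y\<in>S. y < m" by (meson not_le)
  have SK: "S \<subseteq> K" using cl closedin_subset by fastforce
  define U where "U = insert (K - S) ((\<lambda>s. {y\<in>K. s<y}) ` S)"
  have opU: "\<forall>u\<in>U. openin (order_top K) u"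
    unfolding U_def using cl SK open_gt unfolding closedin_def by auto
  have cov: "K \<subseteq> \<Union>U"
  proof
    fix y assume y: "y\<in>K"
    show "y \<in> \<Union>U"
    proof (cases "y\<in>S")
      case True then obtain s where "s\<in>S" "s<y" using nm by blast
      then show ?thesis unfolding U_def using y by auto
    qed (use y in \<open>auto simp: U_def\<close>)
  qed
  obtain F where F: "finite F" "F \<subseteq> U" "K \<subseteq> \<Union>F"
    using cK opU cov unfolding compact_line_def compact_space_alt by force
  have "F - {K - S} \<subseteq> (\<lambda>s. {y\<in>K. s<y}) ` S" using F(2) unfolding U_def by auto
  then obtain T where T: "T \<subseteq> S" "F - {K-S} = (\<lambda>s. {y\<in>K. s<y}) ` T"
    by (meson subset_imageE)
  have fT: "finite T"
  proof -
    have "inj_on (\<lambda>s. {y\<in>K. s<y}) T"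
    proof (rule inj_onI)
      fix a b assume ab: "a\<in>T" "b\<in>T" "{y\<in>K. a<y} = {y\<in>K. b<y}"
      show "a = b"
      proof (rule ccontr)
        assume "a\<noteq>b"
        then have "a<b \<or> b<a" by auto
        then show False using ab T(1) SK by auto
      qed
    qed
    moreover have "finite ((\<lambda>s. {y\<in>K. s<y}) ` T)" using F(1) T(2) by (metis finite_Diff)
    ultimately show ?thesis using finite_image_iff by blast
  qed
  show False
  proof (cases "T = {}")
    case True
    then have "F \<subseteq> {K - S}" using T(2) by auto
    then have "K \<subseteq> K - S" using F(3) by auto
    then show False using ne SK by auto
  next
    case False
    define m where "m = Min T"
    have mT: "m\<in>T" unfolding m_def using fT False by simp
    then have mK: "m \<in> K" "m\<in>S" using T SK by auto
    then obtain u where "u\<in>F" "m\<in>u" using F(3) by auto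
    then have "u \<in> F - {K-S}" using mK by auto
    then obtain s where "s\<in>T" "s<m" using T(2) \<open>m\<in>u\<close> by auto
    then show False using Min_le[OF fT, of s] m_def by auto
  qed
qed

lemma minK_eq: "m \<in> K \<Longrightarrow> (\<forall>y\<in>K. m \<le> y) \<Longrightarrow> minK K = m"
  unfolding minK_def by (rule Least_equality) auto
lemma maxK_eq: "m \<in> K \<Longrightarrow> (\<forall>y\<in>K. y \<le> m) \<Longrightarrow> maxK K = m"
  unfolding maxK_def by (rule Greatest_equality) auto

lemma minK_prop: assumes "compact_line K" "K \<noteq> {}" shows "minK K \<in> K" "\<forall>y\<in>K. minK K \<le> y"
proof -
  obtain m where "m\<in>K" "\<forall>y\<in>K. m \<le> y"
    using closed_has_min[OF assms(1) _ assms(2)] closedin_topspace[of "order_top K"] by auto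
  then show "minK K \<in> K" "\<forall>y\<in>K. minK K \<le> y" using minK_eq by metis+
qed
lemma maxK_prop: assumes "compact_line K" "K \<noteq> {}" shows "maxK K \<in> K" "\<forall>y\<in>K. y \<le> maxK K"
proof -
  obtain m where "m\<in>K" "\<forall>y\<in>K. y \<le> m"
    using closed_has_max[OF assms(1) _ assms(2)] closedin_topspace[of "order_top K"] by auto
  then show "maxK K \<in> K" "\<forall>y\<in>K. y \<le> maxK K" using maxK_eq by metis+
qed

definition lw :: "'a::linorder set \<Rightarrow> 'a \<Rightarrow> 'a" where
  "lw L t = (THE m. m\<in>L \<and> m\<le>t \<and> (\<forall>y\<in>L. y\<le>t \<longrightarrow> y\<le>m))"
definition up :: "'a::linorder set \<Rightarrow> 'a \<Rightarrow> 'a" where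
  "up L t = (THE m. m\<in>L \<and> t\<le>m \<and> (\<forall>y\<in>L. t\<le>y \<longrightarrow> m\<le>y))"

lemma lw_eq: "m\<in>L \<Longrightarrow> m\<le>t \<Longrightarrow> (\<forall>y\<in>L. y\<le>t \<longrightarrow> y\<le>m) \<Longrightarrow> lw L t = m"
  unfolding lw_def by (rule the_equality) (auto intro: order.antisym)
lemma up_eq: "m\<in>L \<Longrightarrow> t\<le>m \<Longrightarrow> (\<forall>y\<in>L. t\<le>y \<longrightarrow> m\<le>y) \<Longrightarrow> up L t = m"
  unfolding up_def by (rule the_equality) (auto intro: order.antisym)

locale CL =
  fixes K L :: "'a::linorder set"
  assumes cK: "compact_line K" and LK: "L \<subseteq> K" and clL: "closedin (order_top K) L"
begin

lemma lw_props:
  assumes t: "t\<in>K" and ex: "\<exists>y\<in>L. y \<le> t"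
  shows "lw L t \<in> L" "lw L t \<le> t" "\<And>y. y\<in>L \<Longrightarrow> y \<le> t \<Longrightarrow> y \<le> lw L t"
proof -
  have "closedin (order_top K) (L \<inter> {y\<in>K. y\<le>t})" using clL closed_le[OF t] by (rule closedin_Int)
  moreover have "L \<inter> {y\<in>K. y\<le>t} \<noteq> {}" using ex LK by auto
  ultimately obtain m where "m \<in> L \<inter> {y\<in>K. y\<le>t}" "\<forall>y\<in>L \<inter> {y\<in>K. y\<le>t}. y \<le> m"
    using closed_has_max[OF cK] by meson
  then have "lw L t = m" "m \<in> L" "m \<le> t" "\<forall>y\<in>L. y\<le>t \<longrightarrow> y\<le>m" using LK by (auto intro!: lw_eq)
  then show "lw L t \<in> L" "lw L t \<le> t" "\<And>y. y\<in>L \<Longrightarrow> y \<le> t \<Longrightarrow> y \<le> lw L t" by auto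
qed

lemma up_props:
  assumes t: "t\<in>K" and ex: "\<exists>y\<in>L. t \<le> y"
  shows "up L t \<in> L" "t \<le> up L t" "\<And>y. y\<in>L \<Longrightarrow> t \<le> y \<Longrightarrow> up L t \<le> y"
proof -
  have "closedin (order_top K) (L \<inter> {y\<in>K. t\<le>y})" using clL closed_ge[OF t] by (rule closedin_Int)
  moreover have "L \<inter> {y\<in>K. t\<le>y} \<noteq> {}" using ex LK by auto
  ultimately obtain m where "m \<in> L \<inter> {y\<in>K. t\<le>y}" "\<forall>y\<in>L \<inter> {y\<in>K. t\<le>y}. m \<le> y"
    using closed_has_min[OF cK] by meson
  then have "up L t = m" "m \<in> L" "t \<le> m" "\<forall>y\<in>L. t\<le>y \<longrightarrow> m\<le>y" using LK by (auto intro!: up_eq)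
  then show "up L t \<in> L" "t \<le> up L t" "\<And>y. y\<in>L \<Longrightarrow> t \<le> y \<Longrightarrow> up L t \<le> y" by auto
qed

lemma open_restrict:
  assumes V: "openin (order_top K) V"
  shows "openin (order_top L) (V \<inter> L)"
proof (rule lr_imp_open)
  show "V \<inter> L \<subseteq> L" by auto
  fix x assume x: "x \<in> V \<inter> L"
  have VK: "V \<subseteq> K" and lx: "lft K V x" and rx: "rgt K V x" using open_imp_lr[OF V] x by auto
  show "lft L (V \<inter> L) x"
    using lx unfolding lft_def
  proof (elim disjE bexE conjE)
    fix a assume a: "a\<in>K" "a<x" "\<forall>y\<in>K. a < y \<and> y \<le> x \<longrightarrow> y \<in> V"
    show "(\<exists>a\<in>L. a < x \<and> (\<forall>y\<in>L. a < y \<and> y \<le> x \<longrightarrow> y \<in> V \<inter> L)) \<or> (\<forall>y\<in>L. y \<le> x \<longrightarrow> y \<in> V \<inter> L)"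
    proof (cases "\<exists>y\<in>L. y \<le> a")
      case True
      note P = lw_props[OF a(1) True]
      show ?thesis
      proof (rule disjI1, rule bexI[of _ "lw L a"], intro conjI ballI impI)
        show "lw L a < x" using P(2) a(2) by auto
        fix y assume y: "y\<in>L" "lw L a < y \<and> y \<le> x"
        then have "a < y" using P(3)[of y] by (meson not_le order.strict_trans2)
        then show "y \<in> V \<inter> L" using a(3) y LK by auto
      qed (use P in auto)
    next
      case False
      then show ?thesis using a(3) LK by (auto simp: not_le)
    qed
  next
    assume "\<forall>y\<in>K. y \<le> x \<longrightarrow> y \<in> V"
    then show "(\<exists>a\<in>L. a < x \<and> (\<forall>y\<in>L. a < y \<and> y \<le> x \<longrightarrow> y \<in> V \<inter> L)) \<or> (\<forall>y\<in>L. y \<le> x \<longrightarrow> y \<in> V \<inter> L)" using LK by auto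
  qed
  show "rgt L (V \<inter> L) x"
    using rx unfolding rgt_def
  proof (elim disjE bexE conjE)
    fix a assume a: "a\<in>K" "x<a" "\<forall>y\<in>K. x \<le> y \<and> y < a \<longrightarrow> y \<in> V"
    show "(\<exists>b\<in>L. x < b \<and> (\<forall>y\<in>L. x \<le> y \<and> y < b \<longrightarrow> y \<in> V \<inter> L)) \<or> (\<forall>y\<in>L. x \<le> y \<longrightarrow> y \<in> V \<inter> L)"
    proof (cases "\<exists>y\<in>L. a \<le> y")
      case True
      note P = up_props[OF a(1) True]
      show ?thesis
      proof (rule disjI1, rule bexI[of _ "up L a"], intro conjI ballI impI)
        show "x < up L a" using P(2) a(2) by auto
        fix y assume y: "y\<in>L" "x \<le> y \<and> y < up L a"
        then have "y < a" using P(3)[of y] by (meson not_le order.strict_trans1)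
        then show "y \<in> V \<inter> L" using a(3) y LK by auto
      qed (use P in auto)
    next
      case False
      then show ?thesis using a(3) LK by (auto simp: not_le)
    qed
  next
    assume "\<forall>y\<in>K. x \<le> y \<longrightarrow> y \<in> V"
    then show "(\<exists>b\<in>L. x < b \<and> (\<forall>y\<in>L. x \<le> y \<and> y < b \<longrightarrow> y \<in> V \<inter> L)) \<or> (\<forall>y\<in>L. x \<le> y \<longrightarrow> y \<in> V \<inter> L)" using LK by auto
  qed
qed

lemma cont_restrict:
  assumes "continuous_map (order_top K) euclideanreal f"
  shows "continuous_map (order_top L) euclideanreal f"
  unfolding continuous_map
proof (intro conjI allI impI)
  show "f ` topspace (order_top L) \<subseteq> topspace euclideanreal" by auto
  fix U :: "real set" assume "openin euclideanreal U"
  then have "openin (order_top K) {x \<in> K. f x \<in> U}"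
    using assms unfolding continuous_map by auto
  from open_restrict[OF this] show "openin (order_top L) {x \<in> topspace (order_top L). f x \<in> U}"
    using LK by (simp add: Int_def conj_commute) (smt (verit) Collect_cong subsetD)
qed

lemma compact_L: "compact_line L"
proof -
  have "compactin (order_top K) L" using closedin_compact_space cK clL unfolding compact_line_def by blast
  then have c1: "compactin (subtopology (order_top K) L) L" using compactin_subtopology by blast
  have tp: "topspace (subtopology (order_top K) L) = L" using LK by auto
  have gen: "openin (subtopology (order_top K) L) (id -` U \<inter> topspace (subtopology (order_top K) L))"
    if U: "U \<in> insert L ((\<lambda>a. {x \<in> L. x < a}) ` L \<union> (\<lambda>a. {x \<in> L. a < x}) ` L)" for U
  proof -
    from U consider "U = L" | a where "a\<in>L" "U = {x\<in>L. x<a}" | a where "a\<in>L" "U = {x\<in>L. a<x}" by blast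
    then show ?thesis
    proof cases
      case 1 then show ?thesis using openin_topspace[of "subtopology (order_top K) L"] tp by simp
    next
      case (2 a)
      then have "id -` U \<inter> L = {x\<in>K. x<a} \<inter> L" using LK by auto
      then show ?thesis unfolding tp using open_lt[of a K] 2 LK by (auto intro: openin_subtopology_Int)
    next
      case (3 a)
      then have "id -` U \<inter> L = {x\<in>K. a<x} \<inter> L" using LK by auto
      then show ?thesis unfolding tp using open_gt[of a K] 3 LK by (auto intro: openin_subtopology_Int)
    qed
  qed
  have "continuous_map (subtopology (order_top K) L) (order_top L) id"
    unfolding order_top_def[of L]
    by (rule continuous_on_generated_topo) (use gen tp in auto)
  from image_compactin[OF c1 this] have "compactin (order_top L) L" by simp
  then show ?thesis unfolding compact_line_def compact_space_def by simp
qed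

end

definition vsum :: "'a::linorder set \<Rightarrow> ('a \<Rightarrow> 'a \<Rightarrow> real) \<Rightarrow> real" where
  "vsum P H = (\<Sum>t\<in>P - {Min P}. H t (prevP P t))"

lemma prevP_eq: "finite P \<Longrightarrow> p\<in>P \<Longrightarrow> p<t \<Longrightarrow> (\<forall>q\<in>P. q<t \<longrightarrow> q \<le> p) \<Longrightarrow> prevP P t = p"
  unfolding prevP_def by (rule Max_eqI) auto

lemma prevP_props:
  assumes "finite P" "q\<in>P" "q<t"
  shows "prevP P t \<in> P" "prevP P t < t" "\<And>q. q\<in>P \<Longrightarrow> q<t \<Longrightarrow> q \<le> prevP P t"
proof -
  have f: "finite {s\<in>P. s<t}" "{s\<in>P. s<t} \<noteq> {}" using assms by auto
  show "prevP P t \<in> P" "prevP P t < t" using Max_in[OF f] unfolding prevP_def by auto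
  show "\<And>q. q\<in>P \<Longrightarrow> q<t \<Longrightarrow> q \<le> prevP P t" unfolding prevP_def using f by auto
qed

lemma prevP_props2:
  assumes "finite P" "t\<in>P - {Min P}"
  shows "prevP P t \<in> P" "prevP P t < t" "\<And>q. q\<in>P \<Longrightarrow> q<t \<Longrightarrow> q \<le> prevP P t"
proof -
  have "Min P \<in> P" "Min P < t" using assms Min_le[of P t] by (auto intro: Min_in simp: order.order_iff_strict)
  then show "prevP P t \<in> P" "prevP P t < t" "\<And>q. q\<in>P \<Longrightarrow> q<t \<Longrightarrow> q \<le> prevP P t"
    using prevP_props[OF assms(1)] by blast+
qed

lemma vsum_cong:
  assumes "finite P" "\<And>a b. a\<in>P \<Longrightarrow> b\<in>P \<Longrightarrow> b < a \<Longrightarrow> H a b = H' a b"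
  shows "vsum P H = vsum P H'"
  unfolding vsum_def
  by (rule sum.cong) (use assms prevP_props2[OF assms(1)] in auto)

lemma vsum_empty[simp]: "vsum {} H = 0" by (simp add: vsum_def)
lemma vsum_single[simp]: "vsum {a} H = 0" by (simp add: vsum_def)

lemma vsum_insert_max:
  assumes P: "finite P" "P \<noteq> {}" and m: "\<forall>p\<in>P. p < m"
  shows "vsum (insert m P) H = vsum P H + H m (Max P)"
proof -
  have mn: "m \<notin> P" using m by auto
  have "Min P < m" using m Min_in[OF P] by blast
  have Mi: "Min (insert m P) = Min P"
    using Min_insert[OF P] \<open>Min P < m\<close> by (simp add: min_def) (meson leD)
  have "insert m P - {Min (insert m P)} = insert m (P - {Min P})"
    using Mi mn Min_in[OF P] m by auto
  then have "vsum (insert m P) H = H m (prevP (insert m P) m) + (\<Sum>t\<in>P - {Min P}. H t (prevP (insert m P) t))"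
    unfolding vsum_def using P mn by simp
  also have "prevP (insert m P) m = Max P"
    by (rule prevP_eq) (use P m Max_in[OF P] in auto)
  also have "(\<Sum>t\<in>P - {Min P}. H t (prevP (insert m P) t)) = vsum P H"
    unfolding vsum_def
  proof (rule sum.cong)
    fix t assume t: "t \<in> P - {Min P}"
    note pp = prevP_props2[OF P(1) t]
    have "prevP (insert m P) t = prevP P t"
      by (rule prevP_eq) (use P pp t m in auto)
    then show "H t (prevP (insert m P) t) = H t (prevP P t)" by simp
  qed simp
  finally show ?thesis by simp
qed

lemma vsum_split:
  assumes A: "finite A" "A \<noteq> {}" and B: "finite B" "B \<noteq> {}" and AB: "\<forall>a\<in>A. \<forall>b\<in>B. a < b"
  shows "vsum (A \<union> B) H = vsum A H + H (Min B) (Max A) + vsum B H"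
  using B AB
proof (induction B rule: finite_linorder_max_induct)
  case empty then show ?case by simp
next
  case (insert m B)
  show ?case
  proof (cases "B = {}")
    case True
    then show ?thesis using vsum_insert_max[OF A, of m H] insert by simp
  next
    case False
    have IH: "vsum (A \<union> B) H = vsum A H + H (Min B) (Max A) + vsum B H" using insert False by auto
    have fAB: "finite (A \<union> B)" "A\<union>B \<noteq> {}" using A insert by auto
    have m: "\<forall>p\<in>A \<union> B. p < m" using insert by auto
    have MAB: "Max (A \<union> B) = Max B"
      by (rule Max_eqI) (use fAB insert Max_in[OF insert(1) False] Max_ge[OF insert(1)] in \<open>auto intro: less_imp_le order.trans\<close>)
    have "vsum (A \<union> insert m B) H = vsum (insert m (A \<union> B)) H" by simp
    also have "\<dots> = vsum (A\<union>B) H + H m (Max B)" using vsum_insert_max[OF fAB m] MAB by simp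
    also have "vsum (insert m B) H = vsum B H + H m (Max B)" using vsum_insert_max[OF insert(1) False] insert by auto
    moreover have "Min B < m" using insert Min_in[OF insert(1) False] by blast
    moreover have "Min (insert m B) = Min B"
      using Min_insert[OF insert(1) False] \<open>Min B < m\<close> by (simp add: min_def) (meson leD)
    ultimately show ?thesis using IH by simp
  qed
qed

lemma vsum_telescope:
  assumes "finite P" "P \<noteq> {}"
  shows "vsum P (\<lambda>a b. g a - g b) = g (Max P) - g (Min P)"
  using assms
proof (induction P rule: finite_linorder_max_induct)
  case empty then show ?case by simp
next
  case (insert m P)
  show ?case
  proof (cases "P = {}")
    case True then show ?thesis by simp
  next
    case False
    have "vsum (insert m P) (\<lambda>a b. g a - g b) = g (Max P) - g (Min P) + (g m - g (Max P))"
      using vsum_insert_max[OF insert(1) False] insert False by auto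
    moreover have "Max (insert m P) = m"
      by (rule Max_eqI) (use insert in \<open>auto intro: less_imp_le\<close>)
    moreover have "Min P < m" using insert Min_in[OF insert(1) False] by blast
    moreover have "Min (insert m P) = Min P"
      using Min_insert[OF insert(1) False] \<open>Min P < m\<close> by (simp add: min_def) (meson leD)
    ultimately show ?thesis by simp
  qed
qed

lemma vsum_reindex:
  assumes P: "finite P" and mono: "\<And>x y. x\<in>P \<Longrightarrow> y\<in>P \<Longrightarrow> x \<le> y \<Longrightarrow> \<phi> x \<le> \<phi> y"
    and H0: "\<And>x. H x x = 0"
  shows "vsum P (\<lambda>a b. H (\<phi> a) (\<phi> b)) = vsum (\<phi> ` P) H"
  using P mono
proof (induction P rule: finite_linorder_max_induct)
  case empty then show ?case by simp
next
  case (insert m P)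
  show ?case
  proof (cases "P = {}")
    case True then show ?thesis by simp
  next
    case False
    have mono': "\<And>x y. x\<in>P \<Longrightarrow> y\<in>P \<Longrightarrow> x \<le> y \<Longrightarrow> \<phi> x \<le> \<phi> y" using insert by auto
    have IH: "vsum P (\<lambda>a b. H (\<phi> a) (\<phi> b)) = vsum (\<phi> ` P) H" using insert mono' by auto
    have L: "vsum (insert m P) (\<lambda>a b. H (\<phi> a) (\<phi> b)) = vsum P (\<lambda>a b. H (\<phi> a) (\<phi> b)) + H (\<phi> m) (\<phi> (Max P))"
      using vsum_insert_max[OF insert(1) False] insert by auto
    have MP: "Max P \<in> P" using insert(1) False by simp
    have fI: "finite (\<phi> ` P)" "\<phi> ` P \<noteq> {}" using insert(1) False by auto
    have MI: "Max (\<phi> ` P) = \<phi> (Max P)"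
      by (rule Max_eqI) (use insert(1) MP mono' in auto)
    have ge: "\<phi> (Max P) \<le> \<phi> m" using insert MP by (auto intro: less_imp_le)
    show ?thesis
    proof (cases "\<phi> m = \<phi> (Max P)")
      case True
      then have "\<phi> ` insert m P = \<phi> ` P" using MP by auto
      then show ?thesis using L IH True H0 by simp
    next
      case False
      have lt: "\<forall>p\<in>\<phi> ` P. p < \<phi> m"
      proof
        fix p assume "p \<in> \<phi> ` P"
        then have "p \<le> \<phi> (Max P)" using MI Max_ge[OF fI(1)] by metis
        then show "p < \<phi> m" using ge False by auto
      qed
      have "vsum (\<phi> ` insert m P) H = vsum (\<phi> ` P) H + H (\<phi> m) (Max (\<phi> ` P))"
        using vsum_insert_max[OF fI lt] by simp
      then show ?thesis using L IH MI by simp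
    qed
  qed
qed


definition ext :: "'a::linorder set \<Rightarrow> ('a \<Rightarrow> real) \<Rightarrow> 'a \<Rightarrow> real" where
  "ext L F t = (if \<exists>y\<in>L. y \<le> t then F (lw L t) else 0)"

lemma bv_iff: "bounded_variation_on K F \<longleftrightarrow> (\<exists>M. \<forall>P. finite P \<and> P \<subseteq> K \<longrightarrow> vsum P (\<lambda>a b. \<bar>F a - F b\<bar>) \<le> M)"
  unfolding bounded_variation_on_def vsum_def by simp

lemma ext_eq:
  assumes "\<forall>y\<in>L. y \<le> s \<longleftrightarrow> y \<le> t"
  shows "ext L F s = ext L F t"
proof -
  have "lw L s = lw L t" unfolding lw_def using assms by metis
  then show ?thesis unfolding ext_def using assms by auto
qed

lemma vsum_zero: "vsum P (\<lambda>a b. 0) = 0" by (simp add: vsum_def)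

context CL begin

lemma lw_self: "t \<in> L \<Longrightarrow> lw L t = t"
  by (rule lw_eq) auto

lemma ext_L: "t \<in> L \<Longrightarrow> ext L F t = F t"
  unfolding ext_def using lw_self by auto

lemma lw_mono: "x\<in>K \<Longrightarrow> y\<in>K \<Longrightarrow> \<exists>z\<in>L. z \<le> x \<Longrightarrow> x \<le> y \<Longrightarrow> lw L x \<le> lw L y"
proof -
  assume a: "x\<in>K" "y\<in>K" "\<exists>z\<in>L. z \<le> x" "x \<le> y"
  then have ey: "\<exists>z\<in>L. z \<le> y" by (meson order.trans)
  show ?thesis using lw_props[OF a(1) a(3)] lw_props[OF a(2) ey] a(4) by (meson order.trans)
qed

lemma rc_const:
  fixes G :: "'a \<Rightarrow> real"
  assumes t: "t\<in>K" and c: "\<forall>s\<in>K. t \<le> s \<longrightarrow> G s = G t" and e: "\<epsilon> > 0"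
  shows "(\<exists>u\<in>K. t < u \<and> (\<forall>s\<in>K. t \<le> s \<and> s < u \<longrightarrow> \<bar>G s - G t\<bar> < \<epsilon>)) \<or> (\<forall>s\<in>K. s \<le> t)"
proof (cases "\<exists>u\<in>K. t < u")
  case True
  then obtain u where "u\<in>K" "t<u" by blast
  then show ?thesis using c e by (intro disjI1 bexI[of _ u]) auto
next
  case False then show ?thesis by (auto simp: not_less)
qed

lemma ext_rc:
  assumes F: "right_continuous_on L F"
  shows "right_continuous_on K (ext L F)"
  unfolding right_continuous_on_def
proof (intro ballI allI impI)
  fix t and e :: real
  assume t: "t\<in>K" and e: "e > 0"
  show "(\<exists>u\<in>K. t < u \<and> (\<forall>s\<in>K. t \<le> s \<and> s < u \<longrightarrow> \<bar>ext L F s - ext L F t\<bar> < e)) \<or> (\<forall>s\<in>K. s \<le> t)"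
  proof (cases "t \<in> L")
    case tL: True
    from F tL e have "(\<exists>u\<in>L. t < u \<and> (\<forall>s\<in>L. t \<le> s \<and> s < u \<longrightarrow> \<bar>F s - F t\<bar> < e)) \<or> (\<forall>s\<in>L. s \<le> t)"
      unfolding right_continuous_on_def by blast
    then show ?thesis
    proof
      assume "\<exists>u\<in>L. t < u \<and> (\<forall>s\<in>L. t \<le> s \<and> s < u \<longrightarrow> \<bar>F s - F t\<bar> < e)"
      then obtain u where u: "u\<in>L" "t<u" "\<forall>s\<in>L. t \<le> s \<and> s < u \<longrightarrow> \<bar>F s - F t\<bar> < e" by blast
      have "\<forall>s\<in>K. t \<le> s \<and> s < u \<longrightarrow> \<bar>ext L F s - ext L F t\<bar> < e"
      proof (intro ballI impI)
        fix s assume s: "s\<in>K" "t \<le> s \<and> s < u"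
        have ex: "\<exists>y\<in>L. y \<le> s" using tL s by auto
        note P = lw_props[OF s(1) ex]
        have "t \<le> lw L s" using P(3)[OF tL] s by auto
        moreover have "lw L s < u" using P(2) s by auto
        ultimately have "\<bar>F (lw L s) - F t\<bar> < e" using u(3) P(1) by auto
        then show "\<bar>ext L F s - ext L F t\<bar> < e" using ext_L[OF tL] ex unfolding ext_def by simp
      qed
      then show ?thesis using u LK by auto
    next
      assume allle: "\<forall>s\<in>L. s \<le> t"
      have "\<forall>s\<in>K. t \<le> s \<longrightarrow> ext L F s = ext L F t"
        using allle by (auto intro!: ext_eq intro: order.trans)
      then show ?thesis using rc_const[OF t _ e] by blast
    qed
  next
    case tL: False
    show ?thesis
    proof (cases "\<exists>y\<in>L. t \<le> y")
      case True
      note U = up_props[OF t True]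
      have tu: "t < up L t" using U tL by (metis order.not_eq_order_implies_strict)
      have "\<forall>s\<in>K. t \<le> s \<and> s < up L t \<longrightarrow> \<bar>ext L F s - ext L F t\<bar> < e"
      proof (intro ballI impI)
        fix s assume s: "s\<in>K" "t \<le> s \<and> s < up L t"
        have "\<forall>y\<in>L. y \<le> s \<longleftrightarrow> y \<le> t"
        proof
          fix y assume y: "y\<in>L"
          show "y \<le> s \<longleftrightarrow> y \<le> t"
          proof
            assume ys: "y \<le> s"
            show "y \<le> t"
            proof (rule ccontr)
              assume "\<not> y \<le> t"
              then have "up L t \<le> y" using U(3)[OF y] by auto
              then show False using ys s by auto
            qed
          qed (use s in auto)
        qed
        then have "ext L F s = ext L F t" by (rule ext_eq)
        then show "\<bar>ext L F s - ext L F t\<bar> < e" using e by simp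
      qed
      then show ?thesis using U(1) LK tu by auto
    next
      case False
      have "\<forall>s\<in>K. t \<le> s \<longrightarrow> ext L F s = ext L F t"
        using False by (auto intro!: ext_eq simp: not_le intro: order.trans less_imp_le)
      then show ?thesis using rc_const[OF t _ e] by blast
    qed
  qed
qed

lemma F_bound:
  assumes ne: "L \<noteq> {}" and M: "\<forall>P. finite P \<and> P \<subseteq> L \<longrightarrow> vsum P (\<lambda>a b. \<bar>F a - F b\<bar>) \<le> M"
    and x: "x \<in> L"
  shows "\<bar>F x\<bar> \<le> \<bar>F (minK L)\<bar> + M"
proof -
  note mp = minK_prop[OF compact_L ne]
  have M0: "0 \<le> M" using M[rule_format, of "{}"] by simp
  show ?thesis
  proof (cases "x = minK L")
    case True then show ?thesis using M0 by simp
  next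
    case False
    then have lt: "minK L < x" using mp x by (metis order.not_eq_order_implies_strict)
    have "vsum (insert x {minK L}) (\<lambda>a b. \<bar>F a - F b\<bar>) = \<bar>F x - F (minK L)\<bar>"
      using vsum_insert_max[of "{minK L}" x] lt by simp
    moreover have "vsum (insert x {minK L}) (\<lambda>a b. \<bar>F a - F b\<bar>) \<le> M"
      using M x mp by auto
    ultimately show ?thesis by linarith
  qed
qed

lemma ext_bv:
  assumes ne: "L \<noteq> {}" and F: "bounded_variation_on L F"
  shows "bounded_variation_on K (ext L F)"
proof -
  obtain M where M: "\<forall>P. finite P \<and> P \<subseteq> L \<longrightarrow> vsum P (\<lambda>a b. \<bar>F a - F b\<bar>) \<le> M"
    using F unfolding bv_iff by blast
  have M0: "0 \<le> M" using M[rule_format, of "{}"] by simp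
  have "vsum P (\<lambda>a b. \<bar>ext L F a - ext L F b\<bar>) \<le> 2*M + \<bar>F (minK L)\<bar>" if P: "finite P" "P \<subseteq> K" for P
  proof -
    define Plo where "Plo = {t\<in>P. \<not>(\<exists>y\<in>L. y \<le> t)}"
    define Phi where "Phi = P - Plo"
    have fin: "finite Plo" "finite Phi" using P unfolding Plo_def Phi_def by auto
    have PU: "P = Plo \<union> Phi" unfolding Phi_def Plo_def by auto
    have ord: "\<forall>a\<in>Plo. \<forall>b\<in>Phi. a < b"
      unfolding Plo_def Phi_def by (auto simp: not_le)
    have lo0: "vsum Plo (\<lambda>a b. \<bar>ext L F a - ext L F b\<bar>) = 0"
    proof -
      have "vsum Plo (\<lambda>a b. \<bar>ext L F a - ext L F b\<bar>) = vsum Plo (\<lambda>a b. 0)"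
        by (rule vsum_cong[OF fin(1)]) (auto simp: Plo_def ext_def)
      then show ?thesis using vsum_zero by simp
    qed
    have hi: "vsum Phi (\<lambda>a b. \<bar>ext L F a - ext L F b\<bar>) \<le> M"
    proof -
      have "vsum Phi (\<lambda>a b. \<bar>ext L F a - ext L F b\<bar>) = vsum Phi (\<lambda>a b. \<bar>F (lw L a) - F (lw L b)\<bar>)"
        by (rule vsum_cong[OF fin(2)]) (auto simp: Phi_def Plo_def ext_def)
      also have "\<dots> = vsum (lw L ` Phi) (\<lambda>a b. \<bar>F a - F b\<bar>)"
        by (rule vsum_reindex[OF fin(2)]) (use P lw_mono in \<open>auto simp: Phi_def Plo_def\<close>)
      also have "\<dots> \<le> M"
      proof -
        have "lw L ` Phi \<subseteq> L" using lw_props(1) P unfolding Phi_def Plo_def by auto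
        then show ?thesis using M fin(2) by auto
      qed
      finally show ?thesis .
    qed
    show ?thesis
    proof (cases "Phi = {}")
      case True
      then show ?thesis using PU lo0 M0 by simp
    next
      case hne: False
      show ?thesis
      proof (cases "Plo = {}")
        case True
        then show ?thesis using PU hi M0 by simp
      next
        case False
        have sp: "vsum P (\<lambda>a b. \<bar>ext L F a - ext L F b\<bar>) = 0 + \<bar>ext L F (Min Phi) - ext L F (Max Plo)\<bar> + vsum Phi (\<lambda>a b. \<bar>ext L F a - ext L F b\<bar>)"
          using vsum_split[OF fin(1) False fin(2) hne ord] PU lo0 by simp
        have m1: "Max Plo \<in> Plo" "Min Phi \<in> Phi" using fin False hne by auto
        then have e0: "ext L F (Max Plo) = 0" unfolding Plo_def ext_def by auto
        have ex: "\<exists>y\<in>L. y \<le> Min Phi" "Min Phi \<in> K" using m1 P unfolding Phi_def Plo_def by auto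
        have "\<bar>ext L F (Min Phi)\<bar> \<le> \<bar>F (minK L)\<bar> + M"
          using F_bound[OF ne M lw_props(1)[OF ex(2) ex(1)]] ex unfolding ext_def by simp
        then show ?thesis using sp e0 hi by linarith
      qed
    qed
  qed
  then show ?thesis unfolding bv_iff by blast
qed

lemma ext_NBV: "L \<noteq> {} \<Longrightarrow> F \<in> NBV L \<Longrightarrow> ext L F \<in> NBV K"
  unfolding NBV_def using ext_rc ext_bv by blast

end

lemma RS_vsum: "RS_sum K F f P s = f (minK K) * F (minK K) + vsum P (\<lambda>a b. f (s a) * (F a - F b))"
  unfolding RS_sum_def vsum_def by simp

definition adm :: "'a::linorder set \<Rightarrow> 'a set \<Rightarrow> 'a set \<Rightarrow> ('a \<Rightarrow> 'a) \<Rightarrow> bool" where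
  "adm K P0 P s \<longleftrightarrow> finite P \<and> P0 \<subseteq> P \<and> P \<subseteq> K \<and> minK K \<in> P \<and> maxK K \<in> P \<and>
     (\<forall>t\<in>P - {Min P}. s t \<in> K \<and> prevP P t < s t \<and> s t \<le> t)"

lemma hsi_iff: "has_stieltjes_integral K F f I \<longleftrightarrow>
  (\<forall>e>0. \<exists>P0. finite P0 \<and> P0 \<subseteq> K \<and> (\<forall>P s. adm K P0 P s \<longrightarrow> \<bar>RS_sum K F f P s - I\<bar> < e))"
  unfolding has_stieltjes_integral_def adm_def by simp

lemma admissible_exists:
  assumes "compact_line K" "K \<noteq> {}" "finite P0" "P0 \<subseteq> K"
  shows "\<exists>P. adm K P0 P id"
proof -
  let ?P = "P0 \<union> {minK K, maxK K}"
  have f: "finite ?P" using assms by auto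
  have "?P \<subseteq> K" using assms minK_prop[OF assms(1,2)] maxK_prop[OF assms(1,2)] by auto
  moreover have "\<forall>t\<in>?P - {Min ?P}. prevP ?P t < t" using prevP_props2[OF f] by blast
  ultimately show ?thesis using f unfolding adm_def by (intro exI[of _ ?P]) auto
qed

lemma adm_mono: "adm K P0 P s \<Longrightarrow> P1 \<subseteq> P0 \<Longrightarrow> adm K P1 P s"
  unfolding adm_def by blast

lemma stieltjes_unique:
  assumes K: "compact_line K" "K \<noteq> {}"
    and I: "has_stieltjes_integral K F f I" and J: "has_stieltjes_integral K F f J"
  shows "I = J"
proof (rule ccontr)
  assume ne: "I \<noteq> J"
  define e where "e = \<bar>I - J\<bar>/2"
  have e: "e > 0" using ne unfolding e_def by simp
  from I[unfolded hsi_iff, rule_format, OF e] obtain P1 where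
    P1: "finite P1" "P1 \<subseteq> K" "\<And>P s. adm K P1 P s \<Longrightarrow> \<bar>RS_sum K F f P s - I\<bar> < e" by blast
  from J[unfolded hsi_iff, rule_format, OF e] obtain P2 where
    P2: "finite P2" "P2 \<subseteq> K" "\<And>P s. adm K P2 P s \<Longrightarrow> \<bar>RS_sum K F f P s - J\<bar> < e" by blast
  obtain P where P: "adm K (P1 \<union> P2) P id"
    using admissible_exists[OF K, of "P1 \<union> P2"] P1 P2 by auto
  have "\<bar>RS_sum K F f P id - I\<bar> < e" using P1(3) adm_mono[OF P] by blast
  moreover have "\<bar>RS_sum K F f P id - J\<bar> < e" using P2(3) adm_mono[OF P] by blast
  ultimately show False unfolding e_def by (auto simp: abs_less_iff abs_if split: if_split_asm)
qed

definition chi :: "'a::linorder \<Rightarrow> 'a \<Rightarrow> real" where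
  "chi t y = (if y \<le> t then 1 else 0)"

lemma chi_integral:
  assumes K: "compact_line K" "K \<noteq> {}" and t: "t \<in> K"
  shows "has_stieltjes_integral K F (chi t) (F t)"
  unfolding hsi_iff
proof (intro allI impI)
  fix e :: real assume e: "e > 0"
  note mp = minK_prop[OF K]
  show "\<exists>P0. finite P0 \<and> P0 \<subseteq> K \<and> (\<forall>P s. adm K P0 P s \<longrightarrow> \<bar>RS_sum K F (chi t) P s - F t\<bar> < e)"
  proof (intro exI[of _ "{t}"] conjI allI impI)
    fix P s
    assume A: "adm K {t} P s"
    then have fP: "finite P" and tP: "t \<in> P" and PK: "P \<subseteq> K" and mP: "minK K \<in> P"
      and tags: "\<forall>u\<in>P - {Min P}. s u \<in> K \<and> prevP P u < s u \<and> s u \<le> u" unfolding adm_def by auto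
    have MinP: "Min P = minK K" by (rule Min_eqI) (use fP mP PK mp in auto)
    define A where "A = {u\<in>P. u \<le> t}"
    have fA: "finite A" using fP unfolding A_def by auto
    have MinA: "Min A = minK K" by (rule Min_eqI) (use fA mP PK mp t in \<open>auto simp: A_def\<close>)
    have MaxA: "Max A = t" by (rule Max_eqI) (use fA tP in \<open>auto simp: A_def\<close>)
    have "vsum P (\<lambda>a b. chi t (s a) * (F a - F b)) = (\<Sum>u\<in>P - {Min P}. if u \<le> t then F u - F (prevP P u) else 0)"
      unfolding vsum_def
    proof (rule sum.cong)
      fix u assume u: "u \<in> P - {Min P}"
      note tg = tags[rule_format, OF u]
      show "chi t (s u) * (F u - F (prevP P u)) = (if u \<le> t then F u - F (prevP P u) else 0)"
      proof (cases "u \<le> t")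
        case True then show ?thesis using tg by (auto simp: chi_def)
      next
        case False
        then have "t \<le> prevP P u" using prevP_props2(3)[OF fP u tP] by auto
        then show ?thesis using tg False by (auto simp: chi_def)
      qed
    qed simp
    also have "\<dots> = (\<Sum>u\<in>A - {Min A}. F u - F (prevP P u))"
      by (rule sum.mono_neutral_cong_right) (use fP MinP MinA in \<open>auto simp: A_def\<close>)
    also have "\<dots> = vsum A (\<lambda>a b. F a - F b)"
      unfolding vsum_def
    proof (rule sum.cong)
      fix u assume u: "u \<in> A - {Min A}"
      then have u': "u \<in> P - {Min P}" using MinP MinA A_def by auto
      note pp = prevP_props2[OF fP u']
      have "prevP A u = prevP P u"
        by (rule prevP_eq) (use fA pp u in \<open>auto simp: A_def\<close>)
      then show "F u - F (prevP P u) = F u - F (prevP A u)" by simp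
    qed simp
    also have "\<dots> = F t - F (minK K)"
    proof -
      have "A \<noteq> {}" using tP A_def by auto
      from vsum_telescope[OF fA this, of F] show ?thesis using MinA MaxA by simp
    qed
    finally have vs: "vsum P (\<lambda>a b. chi t (s a) * (F a - F b)) = F t - F (minK K)" .
    have c1: "chi t (minK K) = 1" using mp t by (simp add: chi_def)
    have "RS_sum K F (chi t) P s = F t"
      unfolding RS_vsum vs c1 by simp
    then show "\<bar>RS_sum K F (chi t) P s - F t\<bar> < e" using e by simp
  qed (use t in auto)
qed

lemma chi_cont:
  assumes t: "t \<in> right_isolated K"
  shows "continuous_map (order_top K) euclideanreal (chi t)"
  unfolding continuous_map
proof (intro conjI allI impI)
  show "chi t ` topspace (order_top K) \<subseteq> topspace euclideanreal" by simp
  fix U :: "real set" assume "openin euclideanreal U"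
  have tK: "t \<in> K" using t unfolding right_isolated_def by auto
  have o1: "openin (order_top K) {x\<in>K. x \<le> t}"
  proof -
    from t have "(\<forall>y\<in>K. y \<le> t) \<or> (\<exists>y\<in>K. t < y \<and> \<not> (\<exists>z\<in>K. t < z \<and> z < y))"
      unfolding right_isolated_def by auto
    then show ?thesis
    proof
      assume "\<forall>y\<in>K. y \<le> t"
      then have "{x\<in>K. x \<le> t} = topspace (order_top K)" by auto
      then show ?thesis by (metis openin_topspace)
    next
      assume "\<exists>y\<in>K. t < y \<and> \<not> (\<exists>z\<in>K. t < z \<and> z < y)"
      then obtain y where y: "y\<in>K" "t<y" "\<not> (\<exists>z\<in>K. t < z \<and> z < y)" by blast
      then have "{x\<in>K. x \<le> t} = {x\<in>K. x < y}" by (auto simp: not_le)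
      then show ?thesis using open_lt[OF y(1)] by simp
    qed
  qed
  have o2: "openin (order_top K) {x\<in>K. t < x}" using open_gt[OF tK] .
  have "{x \<in> topspace (order_top K). chi t x \<in> U} =
        (if (1::real) \<in> U then {x\<in>K. x \<le> t} else {}) \<union> (if (0::real) \<in> U then {x\<in>K. t < x} else {})"
    by (auto simp: chi_def)
  then show "openin (order_top K) {x \<in> topspace (order_top K). chi t x \<in> U}"
    using o1 o2 by (auto intro!: openin_Un)
qed

lemma c0_right_isolated:
  assumes K: "compact_line K" and w: "weak_star_null K F" and t: "t \<in> right_isolated K"
  shows "c0 (\<lambda>i. F i t)"
proof -
  have tK: "t \<in> K" using t unfolding right_isolated_def by auto
  then have ne: "K \<noteq> {}" by auto
  obtain I where I: "\<forall>i. has_stieltjes_integral K (F i) (chi t) (I i)" "c0 I"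
    using w chi_cont[OF t] unfolding weak_star_null_def by blast
  have "I i = F i t" for i using stieltjes_unique[OF K ne I(1)[rule_format, of i] chi_integral[OF K ne tK]] .
  then show ?thesis using I(2) by (metis ext)
qed


lemma open_above: "finite A \<Longrightarrow> A \<subseteq> K \<Longrightarrow> openin (order_top K) {y\<in>K. \<forall>a\<in>A. a<y}"
proof (induction A rule: finite_induct)
  case empty
  then show ?case using openin_topspace[of "order_top K"] by simp
next
  case (insert a A)
  have "{y\<in>K. \<forall>b\<in>insert a A. b<y} = {y\<in>K. a<y} \<inter> {y\<in>K. \<forall>b\<in>A. b<y}" by auto
  then show ?case using insert open_gt[of a K] by (auto intro: openin_Int)
qed

lemma open_below: "finite A \<Longrightarrow> A \<subseteq> K \<Longrightarrow> openin (order_top K) {y\<in>K. \<forall>a\<in>A. y<a}"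
proof (induction A rule: finite_induct)
  case empty
  then show ?case using openin_topspace[of "order_top K"] by simp
next
  case (insert a A)
  have "{y\<in>K. \<forall>b\<in>insert a A. y<b} = {y\<in>K. y<a} \<inter> {y\<in>K. \<forall>b\<in>A. y<b}" by auto
  then show ?case using insert open_lt[of a K] by (auto intro: openin_Int)
qed

lemma lft_set: "lft K V c \<Longrightarrow> \<exists>A. finite A \<and> A \<subseteq> K \<and> (\<forall>a\<in>A. a<c) \<and> (\<forall>y\<in>K. (\<forall>a\<in>A. a<y) \<and> y \<le> c \<longrightarrow> y \<in> V)"
  unfolding lft_def
proof (elim disjE bexE conjE)
  fix a assume "a\<in>K" "a<c" "\<forall>y\<in>K. a < y \<and> y \<le> c \<longrightarrow> y \<in> V"
  then show ?thesis by (intro exI[of _ "{a}"]) auto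
next
  assume "\<forall>y\<in>K. y \<le> c \<longrightarrow> y \<in> V"
  then show ?thesis by (intro exI[of _ "{}"]) auto
qed

lemma rgt_set: "rgt K V c \<Longrightarrow> \<exists>A. finite A \<and> A \<subseteq> K \<and> (\<forall>a\<in>A. c<a) \<and> (\<forall>y\<in>K. (\<forall>a\<in>A. y<a) \<and> c \<le> y \<longrightarrow> y \<in> V)"
  unfolding rgt_def
proof (elim disjE bexE conjE)
  fix a assume "a\<in>K" "c<a" "\<forall>y\<in>K. c \<le> y \<and> y < a \<longrightarrow> y \<in> V"
  then show ?thesis by (intro exI[of _ "{a}"]) auto
next
  assume "\<forall>y\<in>K. c \<le> y \<longrightarrow> y \<in> V"
  then show ?thesis by (intro exI[of _ "{}"]) auto
qed

lemma unif_part: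
  assumes cK: "compact_line K" and f: "continuous_map (order_top K) euclideanreal f" and d: "d > 0"
  shows "\<exists>P1. finite P1 \<and> P1 \<subseteq> K \<and>
     (\<forall>x\<in>K. \<forall>y\<in>K. x \<le> y \<and> (\<forall>p\<in>P1. \<not>(x \<le> p \<and> p < y)) \<longrightarrow> \<bar>f x - f y\<bar> < d)"
proof -
  define V where "V c = {x\<in>K. f x \<in> ball (f c) (d/2)}" for c
  have opV: "openin (order_top K) (V c)" for c
  proof -
    have "openin euclideanreal (ball (f c) (d/2))" using open_ball open_openin by metis
    then have "openin (order_top K) {x \<in> topspace (order_top K). f x \<in> ball (f c) (d/2)}"
      using f unfolding continuous_map by blast
    then show ?thesis unfolding V_def by simp
  qed
  have ex: "\<exists>AB. finite (fst AB) \<and> fst AB \<subseteq> K \<and> finite (snd AB) \<and> snd AB \<subseteq> K \<and>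
      (\<forall>a\<in>fst AB. a<c) \<and> (\<forall>b\<in>snd AB. c<b) \<and> (\<forall>y\<in>K. (\<forall>a\<in>fst AB. a<y) \<and> (\<forall>b\<in>snd AB. y<b) \<longrightarrow> y \<in> V c)"
    if c: "c\<in>K" for c
  proof -
    have cV: "c \<in> V c" using c d unfolding V_def by auto
    then have l: "lft K (V c) c" and r: "rgt K (V c) c" using open_imp_lr[OF opV] by auto
    obtain A where A: "finite A" "A \<subseteq> K" "\<forall>a\<in>A. a<c" "\<forall>y\<in>K. (\<forall>a\<in>A. a<y) \<and> y \<le> c \<longrightarrow> y \<in> V c"
      using lft_set[OF l] by blast
    obtain B where B: "finite B" "B \<subseteq> K" "\<forall>a\<in>B. c<a" "\<forall>y\<in>K. (\<forall>a\<in>B. y<a) \<and> c \<le> y \<longrightarrow> y \<in> V c"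
      using rgt_set[OF r] by blast
    show ?thesis
    proof (intro exI[of _ "(A,B)"], simp only: fst_conv snd_conv, intro conjI ballI impI)
      fix y assume "y\<in>K" "(\<forall>a\<in>A. a<y) \<and> (\<forall>b\<in>B. y<b)"
      then show "y \<in> V c" using A(4) B(4) by (meson linear)
    qed (use A B in auto)
  qed
  define Q where "Q c AB \<longleftrightarrow> finite (fst AB) \<and> fst AB \<subseteq> K \<and> finite (snd AB) \<and> snd AB \<subseteq> K \<and>
      (\<forall>a\<in>fst AB. a<c) \<and> (\<forall>b\<in>snd AB. c<b) \<and> (\<forall>y\<in>K. (\<forall>a\<in>fst AB. a<y) \<and> (\<forall>b\<in>snd AB. y<b) \<longrightarrow> y \<in> V c)" for c AB
  have "\<forall>c\<in>K. \<exists>AB. Q c AB" using ex unfolding Q_def by blast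
  from bchoice[OF this] obtain AB where AB0: "\<forall>c\<in>K. Q c (AB c)" ..
  have AB: "\<And>c. c\<in>K \<Longrightarrow> finite (fst (AB c)) \<and> fst (AB c) \<subseteq> K \<and> finite (snd (AB c)) \<and> snd (AB c) \<subseteq> K \<and>
      (\<forall>a\<in>fst (AB c). a<c) \<and> (\<forall>b\<in>snd (AB c). c<b) \<and> (\<forall>y\<in>K. (\<forall>a\<in>fst (AB c). a<y) \<and> (\<forall>b\<in>snd (AB c). y<b) \<longrightarrow> y \<in> V c)"
    using AB0 unfolding Q_def by blast
  define N where "N c = {y\<in>K. (\<forall>a\<in>fst (AB c). a<y) \<and> (\<forall>b\<in>snd (AB c). y<b)}" for c
  have opN: "openin (order_top K) (N c)" if "c\<in>K" for c
  proof -
    have "N c = {y\<in>K. \<forall>a\<in>fst (AB c). a<y} \<inter> {y\<in>K. \<forall>b\<in>snd (AB c). y<b}" unfolding N_def by auto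
    moreover have "openin (order_top K) {y\<in>K. \<forall>a\<in>fst (AB c). a<y}" using open_above AB[OF that] by blast
    moreover have "openin (order_top K) {y\<in>K. \<forall>b\<in>snd (AB c). y<b}" using open_below AB[OF that] by blast
    ultimately show ?thesis by (simp add: openin_Int)
  qed
  have cN: "c \<in> N c" if "c\<in>K" for c using AB[OF that] that unfolding N_def by auto
  have cpt: "\<forall>U. (\<forall>u\<in>U. openin (order_top K) u) \<and> K \<subseteq> \<Union>U \<longrightarrow> (\<exists>F. finite F \<and> F \<subseteq> U \<and> K \<subseteq> \<Union>F)"
    using cK unfolding compact_line_def compact_space_alt topspace_ot .
  have "(\<forall>u\<in>N ` K. openin (order_top K) u) \<and> K \<subseteq> \<Union>(N ` K)" using opN cN by blast
  then have "\<exists>F. finite F \<and> F \<subseteq> N ` K \<and> K \<subseteq> \<Union>F" using cpt by blast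
  then obtain F where F: "finite F" "F \<subseteq> N ` K" "K \<subseteq> \<Union>F" by blast
  then obtain C where C: "C \<subseteq> K" "finite C" "F = N ` C" by (meson finite_subset_image)
  define P1 where "P1 = (\<Union>c\<in>C. fst (AB c) \<union> snd (AB c))"
  have abC: "\<forall>c\<in>C. fst (AB c) \<subseteq> K \<and> snd (AB c) \<subseteq> K \<and> finite (fst (AB c)) \<and> finite (snd (AB c))"
    using C(1) AB by blast
  have "finite P1" "P1 \<subseteq> K" unfolding P1_def using C(2) abC by auto
  moreover have "\<bar>f x - f y\<bar> < d" if xy: "x\<in>K" "y\<in>K" "x \<le> y" "\<forall>p\<in>P1. \<not>(x \<le> p \<and> p < y)" for x y
  proof -
    obtain c where c: "c\<in>C" "y \<in> N c" using F C xy by auto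
    have cK': "c \<in> K" using c C by auto
    have "x \<in> N c"
      unfolding N_def
    proof (intro CollectI conjI ballI)
      show "x\<in>K" by fact
      fix a assume a: "a \<in> fst (AB c)"
      then have "a < y" using c unfolding N_def by auto
      moreover have "a \<in> P1" using a c unfolding P1_def by auto
      ultimately show "a < x" using xy(4) by (meson not_le)
    next
      fix b assume "b \<in> snd (AB c)"
      then show "x < b" using c xy unfolding N_def by (auto intro: order.strict_trans1)
    qed
    then have "x \<in> V c" "y \<in> V c" using AB[OF cK'] c unfolding N_def by blast+
    then have "dist (f c) (f x) < d/2" "dist (f c) (f y) < d/2" unfolding V_def by auto
    then have "dist (f x) (f c) < d/2" "dist (f y) (f c) < d/2" by (simp_all add: dist_commute)
    then have "dist (f x) (f y) < d" by (rule dist_triangle_half_l)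
    then show ?thesis by (simp add: dist_real_def)
  qed
  ultimately show ?thesis by blast
qed


lemma vsum_add: "vsum P (\<lambda>a b. H1 a b + H2 a b) = vsum P H1 + vsum P H2"
  unfolding vsum_def by (simp add: sum.distrib)
lemma vsum_abs_le: "\<bar>vsum P H\<bar> \<le> vsum P (\<lambda>a b. \<bar>H a b\<bar>)"
  unfolding vsum_def by (rule sum_abs)
lemma vsum_mono: "(\<And>t. t \<in> P - {Min P} \<Longrightarrow> H t (prevP P t) \<le> H' t (prevP P t)) \<Longrightarrow> vsum P H \<le> vsum P H'"
  unfolding vsum_def by (rule sum_mono)
lemma vsum_cmult: "vsum P (\<lambda>a b. c * H a b) = c * vsum P H"
  unfolding vsum_def by (simp add: sum_distrib_left)

context CL begin

lemma mega:
  assumes ne: "L \<noteq> {}" and F: "F \<in> NBV L" and f: "continuous_map (order_top K) euclideanreal f"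
    and J: "has_stieltjes_integral L F f J"
  shows "has_stieltjes_integral K (ext L F) f J"
  unfolding hsi_iff
proof (intro allI impI)
  fix e :: real assume e: "e > 0"
  obtain M where M: "\<forall>P. finite P \<and> P \<subseteq> L \<longrightarrow> vsum P (\<lambda>a b. \<bar>F a - F b\<bar>) \<le> M"
    using F unfolding NBV_def bv_iff by blast
  have M0: "0 \<le> M" using M[rule_format, of "{}"] by simp
  define mL where "mL = minK L"
  define mK where "mK = minK K"
  define B0 where "B0 = \<bar>F mL\<bar>"
  define d where "d = e / (2*(M + B0 + 1))"
  have B00: "0 \<le> B0" unfolding B0_def by simp
  have d0: "d > 0" unfolding d_def using e M0 B00 by simp
  have pos: "M + B0 + 1 > 0" using M0 B00 by simp
  have dMB: "d * (M + B0 + 1) = e/2" unfolding d_def using pos by (simp add: field_simps)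
  then have dlt: "d * M + d * B0 < e/2" using d0 by (simp add: algebra_simps)
  have cL: "compact_line L" by (rule compact_L)
  have Kne: "K \<noteq> {}" using ne LK by auto
  note mLp = minK_prop[OF cL ne, folded mL_def]
  note mKp = minK_prop[OF cK Kne, folded mK_def]
  note MLp = maxK_prop[OF cL ne]
  note MKp = maxK_prop[OF cK Kne]
  have mKL: "mK \<le> mL" using mKp mLp LK by auto
  have e2: "e/2 > 0" using e by simp
  from J[unfolded hsi_iff, rule_format, OF e2] obtain P0 where
    P0: "finite P0" "P0 \<subseteq> L" "\<And>P s. adm L P0 P s \<Longrightarrow> \<bar>RS_sum L F f P s - J\<bar> < e/2" by blast
  have up0: "\<exists>P1. finite P1 \<and> P1 \<subseteq> K \<and> (\<forall>x\<in>K. \<forall>y\<in>K. x \<le> y \<and> (\<forall>p\<in>P1. \<not>(x \<le> p \<and> p < y)) \<longrightarrow> \<bar>f x - f y\<bar> < d)"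
    by (rule unif_part[OF cK f d0])
  then obtain P1 where P1all: "finite P1 \<and> P1 \<subseteq> K \<and> (\<forall>x\<in>K. \<forall>y\<in>K. x \<le> y \<and> (\<forall>p\<in>P1. \<not>(x \<le> p \<and> p < y)) \<longrightarrow> \<bar>f x - f y\<bar> < d)" ..
  then have P1a: "finite P1" "P1 \<subseteq> K"
     and P1c: "\<forall>x\<in>K. \<forall>y\<in>K. x \<le> y \<and> (\<forall>p\<in>P1. \<not>(x \<le> p \<and> p < y)) \<longrightarrow> \<bar>f x - f y\<bar> < d"
    by auto
  have P1c': "\<And>x y. x\<in>K \<Longrightarrow> y\<in>K \<Longrightarrow> x \<le> y \<Longrightarrow> (\<forall>p\<in>P1. \<not>(x \<le> p \<and> p < y)) \<Longrightarrow> \<bar>f x - f y\<bar> < d"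
    using P1c by blast
  note P1 = P1a P1c'
  show "\<exists>P0'. finite P0' \<and> P0' \<subseteq> K \<and> (\<forall>P s. adm K P0' P s \<longrightarrow> \<bar>RS_sum K (ext L F) f P s - J\<bar> < e)"
  proof (intro exI[of _ "P0 \<union> P1 \<union> {mL}"] conjI allI impI)
    show "finite (P0 \<union> P1 \<union> {mL})" using P0 P1 by simp
    show "P0 \<union> P1 \<union> {mL} \<subseteq> K" using P0 P1 LK mLp by auto
    fix P s assume A: "adm K (P0 \<union> P1 \<union> {mL}) P s"
    then have fP: "finite P" and P0P: "P0 \<subseteq> P" and P1P: "P1 \<subseteq> P" and mLP: "mL \<in> P" and PK: "P \<subseteq> K"
      and mKP: "mK \<in> P" and MKP: "maxK K \<in> P"
      and tags: "\<And>u. u\<in>P - {Min P} \<Longrightarrow> s u \<in> K \<and> prevP P u < s u \<and> s u \<le> u"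
      unfolding adm_def mK_def by auto
    have MinP: "Min P = mK" by (rule Min_eqI) (use fP mKP PK mKp in auto)
    have cell: "\<bar>f x - f y\<bar> < d" if t: "t \<in> P - {Min P}" and xy: "x\<in>K" "y\<in>K"
       "prevP P t < x" "x \<le> t" "prevP P t < y" "y \<le> t" for t x y
    proof -
      note pp = prevP_props2[OF fP t]
      have nop: "\<forall>p\<in>P1. \<not>(a \<le> p \<and> p < b)" if "prevP P t < a" "b \<le> t" for a b
      proof (intro ballI notI)
        fix p assume p: "p\<in>P1" "a \<le> p \<and> p < b"
        then have "p \<le> prevP P t" using pp(3)[of p] P1P that by auto
        then show False using p that by auto
      qed
      show ?thesis
      proof (cases "x \<le> y")
        case True show ?thesis using P1(3)[OF xy(1,2) True nop[OF xy(3) xy(6)]] by simp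
      next
        case False
        then have "\<bar>f y - f x\<bar> < d" using P1(3)[OF xy(2,1) _ nop[OF xy(5) xy(4)]] by auto
        then show ?thesis by (simp add: abs_minus_commute)
      qed
    qed
    define Phi where "Phi = {t\<in>P. mL \<le> t}"
    have fPhi: "finite Phi" and PhiP: "Phi \<subseteq> P" using fP unfolding Phi_def by auto
    have mLPhi: "mL \<in> Phi" using mLP unfolding Phi_def by auto
    have MinPhi: "Min Phi = mL" by (rule Min_eqI) (use fPhi mLPhi in \<open>auto simp: Phi_def\<close>)
    have exL: "\<exists>y\<in>L. y \<le> t" "t \<in> K" if "t \<in> Phi" for t using that mLp PK unfolding Phi_def by auto
    have Gphi: "ext L F t = F (lw L t)" if "t \<in> Phi" for t using exL[OF that] unfolding ext_def by auto
    have prevPhi: "prevP Phi t = prevP P t" "t \<in> P - {Min P}" if t: "t \<in> Phi - {Min Phi}" for t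
    proof -
      have tm: "mL < t" using t MinPhi unfolding Phi_def by auto
      then have t': "t \<in> P - {Min P}" using t MinP mKL PhiP by auto
      note pp = prevP_props2[OF fP t']
      have "mL \<le> prevP P t" using pp(3)[OF mLP tm] .
      then show "prevP Phi t = prevP P t"
        by (intro prevP_eq) (use fPhi pp in \<open>auto simp: Phi_def\<close>)
      show "t \<in> P - {Min P}" by fact
    qed
    define PL where "PL = lw L ` Phi"
    have fPL: "finite PL" using fPhi unfolding PL_def by simp
    have PLL: "PL \<subseteq> L" unfolding PL_def using lw_props(1) exL by blast
    have lwmL: "lw L mL = mL" using lw_self mLp by simp
    have mLPL: "mL \<in> PL" unfolding PL_def using mLPhi lwmL by force
    have MinPL: "Min PL = mL" by (rule Min_eqI) (use fPL mLPL PLL mLp in auto)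
    have P0PL: "P0 \<subseteq> PL"
    proof
      fix p assume p: "p \<in> P0"
      then have "p \<in> Phi" "lw L p = p" using P0P P0(2) mLp lw_self unfolding Phi_def by auto
      then show "p \<in> PL" unfolding PL_def by force
    qed
    have MLPL: "maxK L \<in> PL"
    proof -
      have "mL \<le> maxK K" using MKp mLp LK by blast
      then have "maxK K \<in> Phi" using MKP unfolding Phi_def by auto
      moreover have "lw L (maxK K) = maxK L"
        by (rule lw_eq) (use MLp MKp LK in auto)
      ultimately show ?thesis unfolding PL_def by force
    qed
    have admL: "adm L P0 PL id"
      unfolding adm_def using fPL P0PL PLL mLPL MLPL prevP_props2[OF fPL] mLp
      by (auto simp: mL_def)
    have RSL: "\<bar>RS_sum L F f PL id - J\<bar> < e/2" using P0(3)[OF admL] .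
    have RSL_eq: "RS_sum L F f PL id = f mL * F mL + vsum PL (\<lambda>a b. f a * (F a - F b))"
      unfolding RS_vsum mL_def by simp
    define G where "G = ext L F"
    define Hs where "Hs a b = f (s a) * (G a - G b)" for a b
    define H1 where "H1 a b = f (lw L a) * (F (lw L a) - F (lw L b))" for a b
    define H2 where "H2 a b = (f (s a) - f (lw L a)) * (F (lw L a) - F (lw L b))" for a b
    have split12: "vsum Phi Hs = vsum Phi H1 + vsum Phi H2"
    proof -
      have "vsum Phi Hs = vsum Phi (\<lambda>a b. H1 a b + H2 a b)"
        by (rule vsum_cong[OF fPhi]) (simp add: Hs_def H1_def H2_def Gphi G_def algebra_simps)
      then show ?thesis using vsum_add by simp
    qed
    have H1eq: "vsum Phi H1 = vsum PL (\<lambda>a b. f a * (F a - F b))"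
      unfolding H1_def PL_def
      by (rule vsum_reindex[OF fPhi, where H = "\<lambda>a b. f a * (F a - F b)"])
         (use lw_mono exL in auto)
    have H2le: "\<bar>vsum Phi H2\<bar> \<le> d * M"
    proof -
      have "\<bar>vsum Phi H2\<bar> \<le> vsum Phi (\<lambda>a b. \<bar>H2 a b\<bar>)" by (rule vsum_abs_le)
      also have "\<dots> \<le> vsum Phi (\<lambda>a b. d * \<bar>F (lw L a) - F (lw L b)\<bar>)"
      proof (rule vsum_mono)
        fix t assume t: "t \<in> Phi - {Min Phi}"
        note pv = prevPhi[OF t]
        note pp = prevP_props2[OF fP pv(2)]
        define b where "b = prevP P t"
        have bPhi: "b \<in> Phi" using prevP_props2[OF fPhi t] pv unfolding b_def by simp
        have tPhi: "t \<in> Phi" using t by simp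
        have bt: "b < t" using pp unfolding b_def by simp
        show "\<bar>H2 t (prevP Phi t)\<bar> \<le> d * \<bar>F (lw L t) - F (lw L (prevP Phi t))\<bar>"
        proof (cases "lw L t = lw L b")
          case True then show ?thesis unfolding H2_def pv(1) b_def[symmetric] by simp
        next
          case False
          have "lw L t > b"
          proof (rule ccontr)
            assume "\<not> lw L t > b"
            then have "lw L t \<le> b" by simp
            then have "lw L t \<le> lw L b" using lw_props(3)[OF exL(2)[OF bPhi] exL(1)[OF bPhi] lw_props(1)[OF exL(2)[OF tPhi] exL(1)[OF tPhi]]] by simp
            moreover have "lw L b \<le> lw L t" using lw_mono[OF exL(2)[OF bPhi] exL(2)[OF tPhi] exL(1)[OF bPhi]] bt by simp
            ultimately show False using False by simp
          qed
          moreover have "lw L t \<le> t" "lw L t \<in> K" using lw_props[OF exL(2)[OF tPhi] exL(1)[OF tPhi]] LK by auto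
          moreover have "s t \<in> K" "b < s t" "s t \<le> t" using tags[OF pv(2)] unfolding b_def by auto
          ultimately have "\<bar>f (s t) - f (lw L t)\<bar> < d" using cell[OF pv(2)] unfolding b_def by blast
          then have "\<bar>f (s t) - f (lw L t)\<bar> * \<bar>F (lw L t) - F (lw L b)\<bar> \<le> d * \<bar>F (lw L t) - F (lw L b)\<bar>"
            by (intro mult_right_mono) auto
          then show ?thesis unfolding H2_def pv(1) b_def[symmetric] by (simp add: abs_mult)
        qed
      qed
      also have "\<dots> = d * vsum Phi (\<lambda>a b. \<bar>F (lw L a) - F (lw L b)\<bar>)" by (rule vsum_cmult)
      also have "vsum Phi (\<lambda>a b. \<bar>F (lw L a) - F (lw L b)\<bar>) = vsum PL (\<lambda>a b. \<bar>F a - F b\<bar>)"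
        unfolding PL_def
        by (rule vsum_reindex[OF fPhi, where H = "\<lambda>a b. \<bar>F a - F b\<bar>"]) (use lw_mono exL in auto)
      also have "d * vsum PL (\<lambda>a b. \<bar>F a - F b\<bar>) \<le> d * M"
        using M fPL PLL d0 by (intro mult_left_mono) auto
      finally show ?thesis .
    qed
    have RSK: "RS_sum K (ext L F) f P s = f mK * G mK + vsum P Hs"
      unfolding RS_vsum Hs_def G_def mK_def by simp
    have diff: "\<bar>RS_sum K (ext L F) f P s - RS_sum L F f PL id\<bar> < e/2"
    proof (cases "mK = mL")
      case True
      have "P = Phi" using PhiP mKp PK True unfolding Phi_def by auto
      moreover have "G mK = F mL" using True ext_L mLp unfolding G_def by simp
      ultimately have "RS_sum K (ext L F) f P s - RS_sum L F f PL id = vsum Phi H2"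
        using RSK RSL_eq split12 H1eq True by simp
      then show ?thesis using H2le dlt d0 B00 by (smt (verit) mult_nonneg_nonneg)
    next
      case False
      then have lt: "mK < mL" using mKL by simp
      define Plo where "Plo = P - Phi"
      have fPlo: "finite Plo" using fP unfolding Plo_def by simp
      have mKPlo: "mK \<in> Plo" using mKP lt unfolding Plo_def Phi_def by auto
      then have Plone: "Plo \<noteq> {}" by auto
      have PU: "P = Plo \<union> Phi" using PhiP unfolding Plo_def by auto
      have ord: "\<forall>a\<in>Plo. \<forall>b\<in>Phi. a < b" unfolding Plo_def Phi_def by auto
      have G0: "G a = 0" if "a \<in> Plo" for a
      proof -
        have "\<not> (\<exists>y\<in>L. y \<le> a)" using that mLp unfolding Plo_def Phi_def by (auto intro: order.trans)
        then show ?thesis unfolding G_def ext_def by simp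
      qed
      have lo0: "vsum Plo Hs = 0"
      proof -
        have "vsum Plo Hs = vsum Plo (\<lambda>a b. 0)"
          by (rule vsum_cong[OF fPlo]) (simp add: Hs_def G0)
        then show ?thesis using vsum_zero by simp
      qed
      have sp: "vsum P Hs = vsum Plo Hs + Hs (Min Phi) (Max Plo) + vsum Phi Hs"
        using vsum_split[OF fPlo Plone fPhi _ ord] mLPhi PU by auto
      have MaxPlo: "Max Plo \<in> Plo" using fPlo Plone by simp
      have prevmL: "prevP P mL = Max Plo"
        by (rule prevP_eq) (use fP MaxPlo ord mLPhi fPlo in \<open>auto simp: Plo_def Phi_def\<close>)
      have mLt: "mL \<in> P - {Min P}" using mLP MinP False by auto
      have "\<bar>f (s mL) - f mL\<bar> < d"
        using cell[OF mLt] tags[OF mLt] mLp LK PK mLP prevP_props2[OF fP mLt] by auto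
      moreover have "Hs (Min Phi) (Max Plo) = f (s mL) * F mL"
        unfolding Hs_def MinPhi using G0[OF MaxPlo] ext_L[OF mLp(1)] unfolding G_def by simp
      moreover have "G mK = 0" using G0[OF mKPlo] .
      ultimately have "RS_sum K (ext L F) f P s - RS_sum L F f PL id = (f (s mL) - f mL) * F mL + vsum Phi H2"
        and "\<bar>f (s mL) - f mL\<bar> < d"
        using RSK RSL_eq split12 H1eq sp lo0 by (simp_all add: algebra_simps)
      moreover have "\<bar>(f (s mL) - f mL) * F mL\<bar> \<le> d * B0"
        using \<open>\<bar>f (s mL) - f mL\<bar> < d\<close> unfolding B0_def abs_mult by (intro mult_right_mono) auto
      ultimately show ?thesis using H2le dlt by (smt (verit))
    qed
    have "\<bar>RS_sum K (ext L F) f P s - J\<bar> \<le> \<bar>RS_sum K (ext L F) f P s - RS_sum L F f PL id\<bar> + \<bar>RS_sum L F f PL id - J\<bar>"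
      using abs_triangle_ineq[of "RS_sum K (ext L F) f P s - RS_sum L F f PL id" "RS_sum L F f PL id - J"] by simp
    then show "\<bar>RS_sum K (ext L F) f P s - J\<bar> < e" using diff RSL by linarith
  qed
qed

end

lemma accum:
  assumes cK: "compact_line K" and cl: "closedin (order_top K) X" and t: "t \<in> X" "t \<notin> right_isolated X"
    and y: "y \<in> K" "t < y"
  shows "\<exists>z\<in>X. t < z \<and> z < y"
proof (rule ccontr)
  assume no: "\<not> ?thesis"
  have XK: "X \<subseteq> K" using cl closedin_subset by fastforce
  from t have nm: "\<not> (\<forall>w\<in>X. w \<le> t)" and nsucc: "\<forall>w\<in>X. t < w \<longrightarrow> (\<exists>z\<in>X. t < z \<and> z < w)"
    unfolding right_isolated_def by auto
  then obtain w where w: "w\<in>X" "t < w" by (auto simp: not_le)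
  have "y \<le> w" using no w by (auto simp: not_le)
  define S where "S = X \<inter> {v\<in>K. y \<le> v}"
  have clS: "closedin (order_top K) S" unfolding S_def using cl closed_ge[OF y(1)] by (rule closedin_Int)
  have "w \<in> S" using w \<open>y \<le> w\<close> XK unfolding S_def by auto
  then obtain m where m: "m \<in> S" "\<forall>v\<in>S. m \<le> v" using closed_has_min[OF cK clS] by blast
  have "t < m" using m y unfolding S_def by auto
  then obtain z where z: "z\<in>X" "t<z" "z<m" using nsucc m unfolding S_def by auto
  show False
  proof (cases "y \<le> z")
    case True then have "z \<in> S" using z XK unfolding S_def by auto
    then show False using m z by (meson leD)
  next
    case False then show False using no z by (auto simp: not_le)
  qed
qed

context CL begin

lemma H_transfer:
  assumes H: "H \<subseteq> K" "closedin (order_top K) H" "separable_space (subtopology (order_top K) H)"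
  obtains H' where "H' \<subseteq> L" "closedin (order_top L) H'" "separable_space (subtopology (order_top L) H')"
    "\<And>t. t \<in> L \<Longrightarrow> t \<in> H - right_isolated H \<Longrightarrow> t \<notin> right_isolated L \<Longrightarrow> t \<in> H' - right_isolated H'"
proof -
  obtain C where C: "countable C" "C \<subseteq> H" "(subtopology (order_top K) H) closure_of C = H"
  proof -
    have "K \<inter> H = H" using H(1) by auto
    then show ?thesis using H(3) that unfolding separable_space_def by auto
  qed
  define E where "E = lw L ` {d\<in>C. \<exists>y\<in>L. y \<le> d}"
  have EL: "E \<subseteq> L" unfolding E_def using lw_props(1) C(2) H(1) by blast
  have cE: "countable E" unfolding E_def using C(1) by simp
  define H' where "H' = (order_top L) closure_of E"
  have H'L: "H' \<subseteq> L" unfolding H'_def using closure_of_subset_topspace[of "order_top L" E] by simp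
  have clH': "closedin (order_top L) H'" unfolding H'_def by simp
  have EH': "E \<subseteq> H'" unfolding H'_def using EL by (simp add: closure_of_subset)
  have sep: "separable_space (subtopology (order_top L) H')"
    unfolding separable_space_def
  proof (intro exI[of _ E] conjI)
    show "countable E" by fact
    show "E \<subseteq> topspace (subtopology (order_top L) H')" using EH' H'L by auto
    have "subtopology (order_top L) H' closure_of E = H' \<inter> (order_top L closure_of (H' \<inter> E))"
      by (rule closure_of_subtopology)
    also have "H' \<inter> E = E" using EH' by auto
    finally show "subtopology (order_top L) H' closure_of E = topspace (subtopology (order_top L) H')"
      using H'L unfolding H'_def by auto
  qed
  have key: "t \<in> H' - right_isolated H'"
    if t: "t \<in> L" "t \<in> H - right_isolated H" "t \<notin> right_isolated L" for t
  proof -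
    have tK: "t \<in> K" using t LK by auto
    have K1: "\<exists>e\<in>E. t < e \<and> e < y" if y: "y \<in> K" "t < y" for y
    proof -
      obtain z1 where z1: "z1 \<in> L" "t < z1" "z1 < y" using accum[OF cK clL t(1) t(3) y] by blast
      have z1K: "z1 \<in> K" using z1 LK by auto
      obtain h where h: "h \<in> H" "t < h" "h < z1" using accum[OF cK H(2) _ _ z1K z1(2)] t(2) by auto
      define Ob where "Ob = {x\<in>K. t<x} \<inter> {x\<in>K. x<z1}"
      have "openin (order_top K) Ob" unfolding Ob_def using open_gt[OF tK] open_lt[OF z1K] by (rule openin_Int)
      then have "openin (subtopology (order_top K) H) (Ob \<inter> H)" by (simp add: openin_subtopology_Int)
      moreover have "h \<in> Ob \<inter> H" using h H(1) unfolding Ob_def by auto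
      ultimately obtain d where d: "d \<in> C" "d \<in> Ob \<inter> H"
        using C(3) h(1) unfolding in_closure_of[of _ _ C, symmetric] by (metis in_closure_of)
      have dK: "d \<in> K" "t < d" "d < z1" using d unfolding Ob_def by auto
      obtain z2 where z2: "z2 \<in> L" "t < z2" "z2 < d" using accum[OF cK clL t(1) t(3) dK(1) dK(2)] by blast
      have exd: "\<exists>y\<in>L. y \<le> d" using z2 by (auto intro: less_imp_le)
      note lp = lw_props[OF dK(1) exd]
      have "lw L d \<in> E" unfolding E_def using d(1) exd by auto
      moreover have "t < lw L d" using lp(3)[OF z2(1)] z2 by (meson less_imp_le order.strict_trans2)
      moreover have "lw L d < y" using lp(2) dK z1 by (meson order.strict_trans order.strict_trans1)
      ultimately show ?thesis by blast
    qed
    from t(2) obtain w where w: "w \<in> H" "t < w" unfolding right_isolated_def by (auto simp: not_le)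
    have wK: "w \<in> K" using w H(1) by auto
    have tH': "t \<in> H'"
      unfolding H'_def in_closure_of
    proof (intro conjI allI impI)
      show "t \<in> topspace (order_top L)" using t by simp
      fix T assume T: "t \<in> T \<and> openin (order_top L) T"
      then have "rgt L T t" using open_imp_lr by blast
      then show "\<exists>y. y \<in> E \<and> y \<in> T" unfolding rgt_def
      proof (elim disjE bexE conjE)
        fix b assume b: "b\<in>L" "t<b" "\<forall>y\<in>L. t \<le> y \<and> y < b \<longrightarrow> y \<in> T"
        obtain e where "e\<in>E" "t<e" "e<b" using K1[of b] b LK by auto
        then show ?thesis using b EL by (auto intro: less_imp_le)
      next
        assume a: "\<forall>y\<in>L. t \<le> y \<longrightarrow> y \<in> T"
        obtain e where "e\<in>E" "t<e" using K1[OF wK w(2)] by auto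
        then show ?thesis using a EL by (auto intro: less_imp_le)
      qed
    qed
    have "t \<notin> right_isolated H'"
    proof
      assume "t \<in> right_isolated H'"
      then have "(\<forall>y\<in>H'. y \<le> t) \<or> (\<exists>y\<in>H'. t < y \<and> \<not> (\<exists>z\<in>H'. t < z \<and> z < y))"
        unfolding right_isolated_def by auto
      then show False
      proof
        assume "\<forall>y\<in>H'. y \<le> t"
        moreover obtain e where "e\<in>E" "t<e" using K1[OF wK w(2)] by auto
        ultimately show False using EH' by (meson leD subsetD)
      next
        assume "\<exists>y\<in>H'. t < y \<and> \<not> (\<exists>z\<in>H'. t < z \<and> z < y)"
        then obtain y where y: "y\<in>H'" "t<y" "\<not> (\<exists>z\<in>H'. t < z \<and> z < y)" by blast
        have "y \<in> K" using y H'L LK by auto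
        then obtain e where "e\<in>E" "t<e" "e<y" using K1 y by blast
        then show False using y EH' by blast
      qed
    qed
    then show ?thesis using tH' by simp
  qed
  show ?thesis using that H'L clH' sep key by blast
qed

end

theorem proposition3p9:
  fixes K L :: "'a::linorder set"
  assumes "compact_line K"
    and "separably_determined TYPE('i) K"
    and "L \<subseteq> K"
    and "closedin (order_top K) L"
  shows "compact_line L \<and> separably_determined TYPE('i) L"
proof -
  interpret CL K L using assms by unfold_locales auto
  have cL: "compact_line L" by (rule compact_L)
  have sd: "separably_determined TYPE('i) L"
    unfolding separably_determined_def
  proof (intro allI impI)
    fix F :: "'i \<Rightarrow> 'a \<Rightarrow> real" and Q
    assume A: "(\<forall>i. F i \<in> NBV L) \<and> weak_star_null L F \<and> Q \<subseteq> L \<and>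
        (\<forall>H. H \<subseteq> L \<and> closedin (order_top L) H \<and> separable_space (subtopology (order_top L) H) \<longrightarrow>
             countable {t \<in> Q \<inter> (H - right_isolated H). \<not> c0 (\<lambda>i. F i t)})"
    then have NB: "\<And>i. F i \<in> NBV L" and W: "weak_star_null L F" and QL: "Q \<subseteq> L"
      and HC: "\<And>H. H \<subseteq> L \<Longrightarrow> closedin (order_top L) H \<Longrightarrow> separable_space (subtopology (order_top L) H) \<Longrightarrow>
             countable {t \<in> Q \<inter> (H - right_isolated H). \<not> c0 (\<lambda>i. F i t)}" by auto
    show "type_c0l1 Q F"
    proof (cases "L = {}")
      case True
      then have "Q = {}" using QL by auto
      then show ?thesis unfolding type_c0l1_def by (intro exI[of _ F] exI[of _ "\<lambda>i t. 0"]) auto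
    next
      case ne: False
      define G where "G i = ext L (F i)" for i
      have GQ: "G i t = F i t" if "t \<in> Q" for i t using ext_L that QL unfolding G_def by auto
      have "type_c0l1 Q G"
      proof -
        have c1: "(\<forall>i. G i \<in> NBV K)" using ext_NBV[OF ne] NB unfolding G_def by blast
        have c2: "weak_star_null K G"
          unfolding weak_star_null_def
        proof (intro allI impI)
          fix f assume f: "continuous_map (order_top K) euclideanreal f"
          obtain I where I: "\<forall>i. has_stieltjes_integral L (F i) f (I i)" "c0 I"
            using W cont_restrict[OF f] unfolding weak_star_null_def by blast
          have "\<forall>i. has_stieltjes_integral K (G i) f (I i)"
            using mega[OF ne NB f] I(1) unfolding G_def by blast
          then show "\<exists>I. (\<forall>i. has_stieltjes_integral K (G i) f (I i)) \<and> c0 I" using I(2) by blast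
        qed
        have c3: "Q \<subseteq> K" using QL LK by auto
        have c4: "countable {t \<in> Q \<inter> (H - right_isolated H). \<not> c0 (\<lambda>i. G i t)}"
          if H: "H \<subseteq> K" "closedin (order_top K) H" "separable_space (subtopology (order_top K) H)" for H
        proof -
          obtain H' where H': "H' \<subseteq> L" "closedin (order_top L) H'" "separable_space (subtopology (order_top L) H')"
            "\<And>t. t \<in> L \<Longrightarrow> t \<in> H - right_isolated H \<Longrightarrow> t \<notin> right_isolated L \<Longrightarrow> t \<in> H' - right_isolated H'"
            using H_transfer[OF H] by blast
          have "{t \<in> Q \<inter> (H - right_isolated H). \<not> c0 (\<lambda>i. G i t)} \<subseteq> {t \<in> Q \<inter> (H' - right_isolated H'). \<not> c0 (\<lambda>i. F i t)}"
          proof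
            fix t assume t: "t \<in> {t \<in> Q \<inter> (H - right_isolated H). \<not> c0 (\<lambda>i. G i t)}"
            then have tQ: "t \<in> Q" and nc: "\<not> c0 (\<lambda>i. F i t)" using GQ by auto
            have "t \<notin> right_isolated L" using c0_right_isolated[OF cL W] nc by blast
            then show "t \<in> {t \<in> Q \<inter> (H' - right_isolated H'). \<not> c0 (\<lambda>i. F i t)}"
              using H'(4)[of t] t tQ QL nc by auto
          qed
          moreover have "countable {t \<in> Q \<inter> (H' - right_isolated H'). \<not> c0 (\<lambda>i. F i t)}"
            using HC[OF H'(1-3)] .
          ultimately show ?thesis by (rule countable_subset)
        qed
        have pre: "(\<forall>i. G i \<in> NBV K) \<and> weak_star_null K G \<and> Q \<subseteq> K \<and>
          (\<forall>H. H \<subseteq> K \<and> closedin (order_top K) H \<and> separable_space (subtopology (order_top K) H) \<longrightarrow>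
             countable {t \<in> Q \<inter> (H - right_isolated H). \<not> c0 (\<lambda>i. G i t)})"
          using c1 c2 c3 c4 by blast
        show ?thesis using assms(2)[unfolded separably_determined_def, rule_format, OF pre] .
      qed
      then show ?thesis unfolding type_c0l1_def
      proof (elim exE conjE)
        fix a b M
        assume ab1: "\<forall>i. \<forall>t\<in>Q. G i t = a i t + b i t" and ab2: "\<forall>t\<in>Q. c0 (\<lambda>i. a i t)"
          and ab3: "\<forall>i. \<forall>S. finite S \<and> S \<subseteq> Q \<longrightarrow> (\<Sum>t\<in>S. \<bar>b i t\<bar>) \<le> M"
        have "\<forall>i. \<forall>t\<in>Q. F i t = a i t + b i t" using ab1 GQ by simp
        then show "\<exists>a b. (\<forall>i. \<forall>t\<in>Q. F i t = a i t + b i t) \<and> (\<forall>t\<in>Q. c0 (\<lambda>i. a i t)) \<and>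
            (\<exists>M. \<forall>i. \<forall>S. finite S \<and> S \<subseteq> Q \<longrightarrow> (\<Sum>t\<in>S. \<bar>b i t\<bar>) \<le> M)"
          using ab2 ab3 by blast
      qed
    qed
  qed
  show ?thesis using cL sd by simp
qed


end
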